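(* For any $p\in[1,2)$, \[ \|\nabla u\|_{\mathrm L^2(\mathbb T^2)}^2+\|u\|_{\mathrm L^p(\mathbb T^2)}^2\ge\|u\|_{\mathrm L^2(\mathbb T^2)}^2\quad\forall\,u\in\mathrm H^1(\mathbb T^2). \]
   Context: $\mathbb T^2=\mathbb S^1\times\mathbb S^1\approx[-\pi,\pi)^2$ with periodic boundary conditions, equipped with the uniform probability measure $dx\,dy/(4\pi^2)$; all norms are with respect to this measure. *)

theory Defs
  imports "HOL-Analysis.Analysis"
begin

text \<open>The torus T^2 is identified with the fundamental domain [-pi,pi)^2 with
periodic boundary conditions. Functions on T^2 are functions on the plane whose
values on the fundamental domain matter. The measure is the uniform
probability measure dx dy/(4 pi^2) on the fundamental domain.\<close>

definition torus_dom :: "(real \<times> real) set" where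
  "torus_dom = {-pi..<pi} \<times> {-pi..<pi}"

definition torus_measure :: "(real \<times> real) measure" where
  "torus_measure = uniform_measure lborel torus_dom"

definition Lp_norm :: "real \<Rightarrow> (real \<times> real \<Rightarrow> real) \<Rightarrow> real" where
  "Lp_norm p u = (\<integral>z. \<bar>u z\<bar> powr p \<partial>torus_measure) powr (1 / p)"

text \<open>Test functions: continuously differentiable functions on the plane,
2 pi-periodic in each variable (i.e. C^1 functions on T^2), with partial
derivatives phix, phiy.\<close>
definition periodic_C1_test ::
  "(real \<times> real \<Rightarrow> real) \<Rightarrow> (real \<times> real \<Rightarrow> real) \<Rightarrow> (real \<times> real \<Rightarrow> real) \<Rightarrow> bool" where
  "periodic_C1_test phi phix phiy \<longleftrightarrow>
     continuous_on UNIV phix \<and> continuous_on UNIV phiy \<and>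
     (\<forall>z. (phi has_derivative (\<lambda>h. fst h * phix z + snd h * phiy z)) (at z)) \<and>
     (\<forall>x y. phi (x + 2 * pi, y) = phi (x, y) \<and> phi (x, y + 2 * pi) = phi (x, y))"

definition L2_torus :: "(real \<times> real \<Rightarrow> real) \<Rightarrow> bool" where
  "L2_torus f \<longleftrightarrow> f \<in> borel_measurable torus_measure \<and>
                   integrable torus_measure (\<lambda>z. (f z)\<^sup>2)"

text \<open>(g1, g2) is a weak gradient of u on T^2, and u, g1, g2 are in L^2:
this is exactly u \<in> H^1(T^2) with weak gradient (g1,g2).\<close>
definition H1_weak_gradient ::
  "(real \<times> real \<Rightarrow> real) \<Rightarrow> (real \<times> real \<Rightarrow> real) \<Rightarrow> (real \<times> real \<Rightarrow> real) \<Rightarrow> bool" where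
  "H1_weak_gradient u g1 g2 \<longleftrightarrow>
     L2_torus u \<and> L2_torus g1 \<and> L2_torus g2 \<and>
     (\<forall>phi phix phiy. periodic_C1_test phi phix phiy \<longrightarrow>
        (\<integral>z. u z * phix z \<partial>torus_measure) = - (\<integral>z. g1 z * phi z \<partial>torus_measure) \<and>
        (\<integral>z. u z * phiy z \<partial>torus_measure) = - (\<integral>z. g2 z * phi z \<partial>torus_measure))"

definition grad_L2_sq :: "(real \<times> real \<Rightarrow> real) \<Rightarrow> (real \<times> real \<Rightarrow> real) \<Rightarrow> real" where
  "grad_L2_sq g1 g2 = (\<integral>z. (g1 z)\<^sup>2 + (g2 z)\<^sup>2 \<partial>torus_measure)"

end

theory Submission
  imports Defs "HOL-Probability.Probability"
begin

section \<open>The one-dimensional measure\<close>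

definition nu :: "real measure" where "nu = uniform_measure lborel {-pi..<pi}"

lemma emeasure_I1: "emeasure lborel {-pi..<pi} = ennreal (2*pi)"
  by (simp add: emeasure_lborel_Ico)

lemma nu_density: "nu = density lborel (\<lambda>x. ennreal (indicator {-pi..<pi} x / (2*pi)))"
proof -
  have *: "1 / ennreal (2 * pi) = ennreal (1 / (2 * pi))"
    using divide_ennreal[of 1 "2*pi"] by simp
  show ?thesis
  unfolding nu_def uniform_measure_def emeasure_I1
  by (intro arg_cong[where f="density lborel"] ext) (simp add: * split: split_indicator)
qed

lemma prob_nu: "prob_space nu"
  unfolding nu_def by (rule prob_space_uniform_measure) (simp_all add: emeasure_I1)

lemma sets_nu[simp, measurable_cong]: "sets nu = sets borel"
  by (simp add: nu_def)

lemma space_nu[simp]: "space nu = UNIV"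
  by (simp add: nu_def)

lemma integral_nu:
  assumes [measurable]: "f \<in> borel_measurable borel"
  shows "integral\<^sup>L nu f = (LBINT x. f x * indicator {-pi..pi} x) / (2*pi)"
proof -
  have "integral\<^sup>L nu f = (LBINT x. (indicator {-pi..<pi} x / (2*pi)) *\<^sub>R f x)"
    unfolding nu_density by (rule integral_density) auto
  also have "\<dots> = (LBINT x. f x * indicator {-pi..pi} x / (2*pi))"
    by (intro integral_cong_AE) (auto intro!: AE_I2[of _ "\<lambda>x. x \<noteq> pi"] eventually_mono[OF AE_lborel_singleton[of pi]] split: split_indicator)
  also have "\<dots> = (LBINT x. f x * indicator {-pi..pi} x) / (2*pi)"
    by simp
  finally show ?thesis .
qed

lemma int_cos_nu: "integral\<^sup>L nu (\<lambda>x. cos (of_int r * x)) = (if r = 0 then 1 else 0)"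
proof (cases "r = 0")
  case True
  then show ?thesis using prob_space.prob_space[OF prob_nu]
    by (simp add: measure_def prob_space.emeasure_space_1[OF prob_nu])
next
  case False
  have "(LBINT x. cos (of_int r * x) * indicator {-pi..pi} x) = sin (of_int r * pi) / of_int r - sin (of_int r * (-pi)) / of_int r"
    by (rule integral_FTC_Icc_real[where F="\<lambda>x. sin (of_int r * x) / of_int r"])
       (use False in \<open>auto intro!: derivative_eq_intros\<close>)
  also have "\<dots> = 0"
    by (simp add: sin_times_pi_eq_0)
  finally show ?thesis using False by (simp add: integral_nu)
qed

lemma int_sin_nu: "integral\<^sup>L nu (\<lambda>x. sin (of_int r * x)) = 0"
proof (cases "r = 0")
  case True
  then show ?thesis by simp
next
  case False
  have "(LBINT x. sin (of_int r * x) * indicator {-pi..pi} x) = (- cos (of_int r * pi) / of_int r) - (- cos (of_int r * (-pi)) / of_int r)"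
    by (rule integral_FTC_Icc_real[where F="\<lambda>x. - cos (of_int r * x) / of_int r"])
       (use False in \<open>auto intro!: derivative_eq_intros\<close>)
  also have "\<dots> = 0"
    by simp
  finally show ?thesis by (simp add: integral_nu)
qed

lemma integrable_bounded_fm:
  fixes f :: "'a \<Rightarrow> real"
  assumes "finite_measure M" "f \<in> borel_measurable M" "\<And>x. \<bar>f x\<bar> \<le> B"
  shows "integrable M f"
  using assms by (intro finite_measure.integrable_const_bound[where B=B]) auto

lemma fm_nu: "finite_measure nu"
  by (metis prob_nu prob_space_def)

lemma integrable_cos_nu[simp]: "integrable nu (\<lambda>x. cos (c * x))"
  by (rule integrable_bounded_fm[OF fm_nu, where B=1]) auto

lemma integrable_sin_nu[simp]: "integrable nu (\<lambda>x. sin (c * x))"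
  by (rule integrable_bounded_fm[OF fm_nu, where B=1]) auto

section \<open>The one-dimensional orthonormal basis\<close>

definition freq :: "nat \<Rightarrow> nat" where "freq a = (a + 1) div 2"

definition e :: "nat \<Rightarrow> real \<Rightarrow> real" where
  "e a x = (if a = 0 then 1 else if odd a then sqrt 2 * cos (real (freq a) * x)
            else sqrt 2 * sin (real (freq a) * x))"

lemma freq_pos: "a \<noteq> 0 \<Longrightarrow> freq a \<ge> 1"
  by (simp add: freq_def)

lemma freq_inj: "odd a = odd b \<Longrightarrow> a \<noteq> 0 \<Longrightarrow> b \<noteq> 0 \<Longrightarrow> freq a = freq b \<Longrightarrow> a = b"
  unfolding freq_def by presburger

lemma sq2: "sqrt 2 * a * (sqrt 2 * b) = 2 * (a * (b::real))"
proof -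
  have "sqrt 2 * a * (sqrt 2 * b) = (sqrt 2 * sqrt 2) * (a*b)" by (simp only: mult_ac)
  then show ?thesis by simp
qed

lemma int_one_nu: "integral\<^sup>L nu (\<lambda>x. 1) = (1::real)"
  unfolding lebesgue_integral_const using prob_space.prob_space[OF prob_nu] by simp

lemma ic_nat: "(LINT x|nu. cos (real n * x)) = (if n = 0 then 1 else 0)"
  using int_cos_nu[of "int n"] by simp

lemma is_nat: "(LINT x|nu. sin (real n * x)) = 0"
  using int_sin_nu[of "int n"] by simp

lemma ic_diff: "(LINT x|nu. cos ((real n - real m) * x)) = (if n = m then 1 else 0)"
  using int_cos_nu[of "int n - int m"] by simp

lemma ic_sum: "(LINT x|nu. cos ((real n + real m) * x)) = (if n + m = 0 then 1 else 0)"
  using int_cos_nu[of "int n + int m"] by simp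

lemma is_diff: "(LINT x|nu. sin ((real n - real m) * x)) = 0"
  using int_sin_nu[of "int n - int m"] by simp

lemma is_sum: "(LINT x|nu. sin ((real n + real m) * x)) = 0"
  using int_sin_nu[of "int n + int m"] by simp

lemma prod_cc: "2 * (cos (real n * x) * cos (real m * x)) = cos (of_int (int n - int m) * x) + cos (of_int (int n + int m) * x)"
  by (simp add: algebra_simps cos_diff cos_add)

lemma prod_ss: "2 * (sin (real n * x) * sin (real m * x)) = cos (of_int (int n - int m) * x) - cos (of_int (int n + int m) * x)"
  by (simp add: algebra_simps cos_diff cos_add)

lemma prod_cs: "2 * (cos (real n * x) * sin (real m * x)) = sin (of_int (int m + int n) * x) + sin (of_int (int m - int n) * x)"
  by (simp add: algebra_simps sin_diff sin_add)

lemma int_e_nu: "integral\<^sup>L nu (e a) = (if a = 0 then 1 else 0)"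
proof -
  have "integral\<^sup>L nu (\<lambda>x. cos (of_int (int (freq a)) * x)) = 0" if "a \<noteq> 0"
    using int_cos_nu[of "int (freq a)"] freq_pos[OF that] by simp
  moreover have "integral\<^sup>L nu (\<lambda>x. sin (of_int (int (freq a)) * x)) = 0"
    by (rule int_sin_nu)
  show ?thesis
    using int_one_nu freq_pos[of a]
    by (cases "a = 0"; cases "odd a") (auto simp: e_def[abs_def] ic_nat is_nat)
qed

lemma ortho1: "integral\<^sup>L nu (\<lambda>x. e a x * e b x) = (if a = b then 1 else 0)"
proof (cases "a = 0 \<or> b = 0")
  case True
  then show ?thesis
  proof
    assume "a = 0" then show ?thesis using int_e_nu[of b] by (simp add: e_def[of 0] )
  next
    assume "b = 0" then show ?thesis using int_e_nu[of a] by (simp add: e_def[of 0])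
  qed
next
  case False
  then have a0: "a \<noteq> 0" and b0: "b \<noteq> 0" by auto
  define n where "n = freq a"
  define m where "m = freq b"
  have n1: "n \<ge> 1" "m \<ge> 1" using freq_pos a0 b0 n_def m_def by auto
  have nm: "int n + int m \<noteq> 0" using n1 by simp
  consider "odd a" "odd b" | "even a" "even b" | "odd a" "even b" | "even a" "odd b" by blast
  then show ?thesis
  proof cases
    case 1
    have "(\<lambda>x. e a x * e b x) = (\<lambda>x. cos (of_int (int n - int m) * x) + cos (of_int (int n + int m) * x))"
      using 1 a0 b0 prod_cc[of n _ m] by (auto simp: e_def n_def m_def fun_eq_iff sq2)
    then show ?thesis using 1 a0 b0 n1 freq_inj[of a b]
      by (simp add: integral_add ic_diff ic_sum n_def m_def) 
  next
    case 2
    have "(\<lambda>x. e a x * e b x) = (\<lambda>x. cos (of_int (int n - int m) * x) - cos (of_int (int n + int m) * x))"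
      using 2 a0 b0 prod_ss[of n _ m] by (auto simp: e_def n_def m_def fun_eq_iff sq2)
    then show ?thesis using 2 a0 b0 n1 freq_inj[of a b]
      by (simp add: integral_diff ic_diff ic_sum n_def m_def) 
  next
    case 3
    have "(\<lambda>x. e a x * e b x) = (\<lambda>x. sin (of_int (int m + int n) * x) + sin (of_int (int m - int n) * x))"
      using 3 a0 b0 prod_cs[of n _ m] by (auto simp: e_def n_def m_def fun_eq_iff sq2)
    then show ?thesis using 3
      by (auto simp add: integral_add is_diff is_sum) 
  next
    case 4
    have "(\<lambda>x. e a x * e b x) = (\<lambda>x. sin (of_int (int n + int m) * x) + sin (of_int (int n - int m) * x))"
      using 4 a0 b0 prod_cs[of m _ n] by (auto simp: e_def n_def m_def fun_eq_iff sq2 mult.commute)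
    then show ?thesis using 4
      by (auto simp add: integral_add is_diff is_sum) 
  qed
qed

section \<open>The torus measure as a product\<close>

lemma sf_nu: "sigma_finite_measure nu"
  by (rule prob_space_imp_sigma_finite[OF prob_nu])

lemma emeasure_nu: "A \<in> sets borel \<Longrightarrow> emeasure nu A = emeasure lborel ({-pi..<pi} \<inter> A) / ennreal (2*pi)"
  unfolding nu_def by (subst emeasure_uniform_measure) (auto simp: emeasure_I1)

lemma emeasure_lborel_Times:
  fixes A B :: "real set"
  assumes "A \<in> sets borel" "B \<in> sets borel"
  shows "emeasure lborel (A \<times> B) = emeasure lborel A * emeasure lborel B"
proof -
  have "emeasure (lborel \<Otimes>\<^sub>M lborel) (A \<times> B) = emeasure lborel A * emeasure lborel B"
    using assms by (intro lborel.emeasure_pair_measure_Times) auto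
  then show ?thesis by (simp add: lborel_prod)
qed

lemma mu_eq: "torus_measure = nu \<Otimes>\<^sub>M nu"
proof (rule pair_measure_eqI[symmetric, OF sf_nu sf_nu])
  show "sets (nu \<Otimes>\<^sub>M nu) = sets torus_measure"
  proof -
    have "sets (nu \<Otimes>\<^sub>M nu) = sets (borel \<Otimes>\<^sub>M borel :: (real \<times> real) measure)"
      by (rule sets_pair_measure_cong) auto
    also have "\<dots> = sets (borel :: (real \<times> real) measure)"
      by (simp only: borel_prod)
    finally show ?thesis by (simp add: torus_measure_def)
  qed
next
  fix A B assume A: "A \<in> sets nu" and B: "B \<in> sets nu"
  then have A': "A \<in> sets borel" and B': "B \<in> sets borel" by auto
  have dom: "torus_dom \<inter> A \<times> B = ({-pi..<pi} \<inter> A) \<times> ({-pi..<pi} \<inter> B)"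
    by (auto simp: torus_dom_def)
  have md: "emeasure lborel torus_dom = ennreal (2*pi) * ennreal (2*pi)"
    unfolding torus_dom_def by (subst emeasure_lborel_Times) (auto simp: emeasure_I1)
  have fa: "emeasure lborel ({-pi..<pi} \<inter> A) < \<top>"
    by (rule le_less_trans[OF emeasure_mono[of _ "{-pi..<pi}"]]) (auto simp: emeasure_I1)
  have fb: "emeasure lborel ({-pi..<pi} \<inter> B) < \<top>"
    by (rule le_less_trans[OF emeasure_mono[of _ "{-pi..<pi}"]]) (auto simp: emeasure_I1)
  have "emeasure torus_measure (A \<times> B) = emeasure lborel (torus_dom \<inter> A \<times> B) / emeasure lborel torus_dom"
    unfolding torus_measure_def using A' B'
    by (subst emeasure_uniform_measure) (auto simp: torus_dom_def intro!: borel_Times)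
  also have "\<dots> = emeasure lborel ({-pi..<pi} \<inter> A) * emeasure lborel ({-pi..<pi} \<inter> B) / (ennreal (2*pi) * ennreal (2*pi))"
    unfolding dom md using A' B' by (subst emeasure_lborel_Times) auto
  also have "\<dots> = emeasure nu A * emeasure nu B"
    using A' B' fa fb
    by (simp add: emeasure_nu divide_ennreal_def ennreal_inverse_mult mult_ac)
  finally show "emeasure nu A * emeasure nu B = emeasure torus_measure (A \<times> B)" by simp
qed

lemma prob_mu: "prob_space torus_measure"
  unfolding mu_eq by (intro prob_space_pair prob_nu)

lemma fm_mu: "finite_measure torus_measure"
  by (metis prob_mu prob_space_def)

lemma sets_mu[simp, measurable_cong]: "sets torus_measure = sets borel"
  by (simp add: torus_measure_def)

lemma space_mu[simp]: "space torus_measure = UNIV"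
  by (simp add: torus_measure_def)

lemma int_prod:
  fixes f g :: "real \<Rightarrow> real"
  assumes [measurable]: "f \<in> borel_measurable borel" "g \<in> borel_measurable borel"
    and bf: "\<And>x. \<bar>f x\<bar> \<le> Bf" and bg: "\<And>x. \<bar>g x\<bar> \<le> Bg"
  shows "integral\<^sup>L torus_measure (\<lambda>z. f (fst z) * g (snd z)) = integral\<^sup>L nu f * integral\<^sup>L nu g"
proof -
  interpret pair_sigma_finite nu nu
    by (simp add: pair_sigma_finite.intro sf_nu)
  have int: "integrable (nu \<Otimes>\<^sub>M nu) (\<lambda>z. f (fst z) * g (snd z))"
  proof (rule integrable_bounded_fm[where B="Bf * Bg"])
    show "finite_measure (nu \<Otimes>\<^sub>M nu)" using fm_mu mu_eq by simp
    show "(\<lambda>z. f (fst z) * g (snd z)) \<in> borel_measurable (nu \<Otimes>\<^sub>M nu)"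
      by measurable
    fix z show "\<bar>f (fst z) * g (snd z)\<bar> \<le> Bf * Bg"
      unfolding abs_mult by (intro mult_mono bf bg) (use bf[of 0] in auto)
  qed
  have "integral\<^sup>L (nu \<Otimes>\<^sub>M nu) (\<lambda>z. f (fst z) * g (snd z)) = (\<integral>x. (\<integral>y. f x * g y \<partial>nu) \<partial>nu)"
    using integral_fst'[OF int] by simp
  also have "\<dots> = (\<integral>x. f x * integral\<^sup>L nu g \<partial>nu)"
    by simp
  also have "\<dots> = integral\<^sup>L nu f * integral\<^sup>L nu g"
    by simp
  finally show ?thesis unfolding mu_eq .
qed

section \<open>Two-dimensional basis\<close>

lemma e_cont: "continuous_on UNIV (e a)"
  by (cases "a = 0"; cases "odd a") (auto simp: e_def[abs_def] intro!: continuous_intros)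

lemma e_meas[measurable]: "e a \<in> borel_measurable borel"
  by (rule borel_measurable_continuous_onI[OF e_cont])

lemma e_bound: "\<bar>e a x\<bar> \<le> sqrt 2"
proof -
  have "sqrt 2 * \<bar>cos t\<bar> \<le> sqrt 2" "sqrt 2 * \<bar>sin t\<bar> \<le> sqrt 2" for t
    by (auto intro: mult_left_le)
  moreover have "(1::real) \<le> sqrt 2" by simp
  ultimately show ?thesis by (auto simp: e_def abs_mult)
qed

definition E :: "nat \<times> nat \<Rightarrow> real \<times> real \<Rightarrow> real" where
  "E p z = e (fst p) (fst z) * e (snd p) (snd z)"

lemma E_cont: "continuous_on UNIV (E p)"
  unfolding E_def[abs_def]
  by (intro continuous_on_mult continuous_on_compose2[OF e_cont] continuous_intros) auto

lemma E_meas[measurable]: "E p \<in> borel_measurable borel"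
  by (rule borel_measurable_continuous_onI[OF E_cont])

lemma E_bound: "\<bar>E p z\<bar> \<le> 2"
proof -
  have "\<bar>E p z\<bar> \<le> sqrt 2 * sqrt 2"
    unfolding E_def abs_mult by (intro mult_mono e_bound) auto
  then show ?thesis by simp
qed

lemma ortho2: "integral\<^sup>L torus_measure (\<lambda>z. E p z * E q z) = (if p = q then 1 else 0)"
proof -
  have eq: "(\<lambda>z. E p z * E q z) = (\<lambda>z. (\<lambda>x. e (fst p) x * e (fst q) x) (fst z) * (\<lambda>y. e (snd p) y * e (snd q) y) (snd z))"
    by (auto simp: E_def fun_eq_iff mult_ac)
  have "integral\<^sup>L torus_measure (\<lambda>z. E p z * E q z) = integral\<^sup>L torus_measure (\<lambda>z. (\<lambda>x. e (fst p) x * e (fst q) x) (fst z) * (\<lambda>y. e (snd p) y * e (snd q) y) (snd z))"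
    by (simp only: eq)
  also have "\<dots> = integral\<^sup>L nu (\<lambda>x. e (fst p) x * e (fst q) x) * integral\<^sup>L nu (\<lambda>y. e (snd p) y * e (snd q) y)"
  proof (rule int_prod[where Bf=2 and Bg=2])
    have "\<bar>e a x * e b x\<bar> \<le> sqrt 2 * sqrt 2" for a b x
      unfolding abs_mult by (intro mult_mono e_bound) auto
    then show "\<bar>e (fst p) x * e (fst q) x\<bar> \<le> 2" "\<bar>e (snd p) x * e (snd q) x\<bar> \<le> 2" for x
      by auto
  qed auto
  also have "\<dots> = (if p = q then 1 else 0)"
    by (simp add: ortho1 prod_eq_iff)
  finally show ?thesis .
qed

section \<open>Derivatives of the basis\<close>

definition sig :: "nat \<Rightarrow> nat" where
  "sig a = (if a = 0 then 0 else if odd a then a + 1 else a - 1)"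

definition sg :: "nat \<Rightarrow> real" where
  "sg a = (if a = 0 then 0 else if odd a then - real (freq a) else real (freq a))"

lemma sig_sig[simp]: "sig (sig a) = a"
  unfolding sig_def by auto

lemma freq_sig[simp]: "freq (sig a) = freq a"
  unfolding sig_def freq_def by auto

lemma sig_lt: "odd M \<Longrightarrow> a < M \<Longrightarrow> sig a < M"
  unfolding sig_def by auto presburger

lemma sig_0_iff[simp]: "sig a = 0 \<longleftrightarrow> a = 0"
  unfolding sig_def by auto

lemma sg_sq: "(sg a)\<^sup>2 = (real (freq a))\<^sup>2 \<or> a = 0"
  unfolding sg_def by auto

lemma sg_sq_sig: "(sg (sig a))\<^sup>2 = (sg a)\<^sup>2"
  unfolding sg_def by (auto simp: freq_sig)

lemma sg_sq_ge: "a \<noteq> 0 \<Longrightarrow> (sg a)\<^sup>2 \<ge> 1"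
  using freq_pos[of a] unfolding sg_def by auto

lemma e_deriv: "(e a has_real_derivative sg a * e (sig a) x) (at x)"
proof -
  consider "a = 0" | "a \<noteq> 0" "odd a" | "a \<noteq> 0" "even a" by blast
  then show ?thesis
  proof cases
    case 1
    then show ?thesis by (simp add: e_def[abs_def] sg_def)
  next
    case 2
    then have s: "sig a = a + 1" "even (a+1)" "a + 1 \<noteq> 0" by (auto simp: sig_def)
    have "e a = (\<lambda>x. sqrt 2 * cos (real (freq a) * x))" using 2 by (auto simp: e_def[abs_def])
    moreover have "sg a * e (sig a) x = sqrt 2 * (- sin (real (freq a) * x) * real (freq a))"
      using 2 s freq_sig[of a] by (simp add: sg_def e_def del: freq_sig)
    ultimately show ?thesis
      by (auto intro!: derivative_eq_intros)
  next
    case 3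
    then have s: "sig a = a - 1" "odd (a-1)" "a - 1 \<noteq> 0" by (auto simp: sig_def)
    have "e a = (\<lambda>x. sqrt 2 * sin (real (freq a) * x))" using 3 by (auto simp: e_def[abs_def])
    moreover have "sg a * e (sig a) x = sqrt 2 * (cos (real (freq a) * x) * real (freq a))"
      using 3 s freq_sig[of a] by (simp add: sg_def e_def del: freq_sig)
    ultimately show ?thesis
      by (auto intro!: derivative_eq_intros)
  qed
qed

lemma e_periodic: "e a (x + 2 * pi) = e a x"
proof -
  have "real (freq a) * (x + 2 * pi) = real (freq a) * x + 2 * real (freq a) * pi"
    by (simp add: algebra_simps)
  then show ?thesis
    by (simp add: e_def cos_add sin_add sin_2npi cos_2npi)
qed

lemma E_test: "periodic_C1_test (E p) (\<lambda>z. sg (fst p) * E (sig (fst p), snd p) z) (\<lambda>z. sg (snd p) * E (fst p, sig (snd p)) z)"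
  unfolding periodic_C1_test_def
proof (intro conjI allI)
  show "continuous_on UNIV (\<lambda>z. sg (fst p) * E (sig (fst p), snd p) z)"
    by (intro continuous_intros E_cont)
  show "continuous_on UNIV (\<lambda>z. sg (snd p) * E (fst p, sig (snd p)) z)"
    by (intro continuous_intros E_cont)
next
  fix x y
  show "E p (x + 2 * pi, y) = E p (x, y)" "E p (x, y + 2 * pi) = E p (x, y)"
    by (simp_all add: E_def e_periodic)
next
  fix z :: "real \<times> real"
  obtain a b where p: "p = (a, b)" by force
  have d1: "((\<lambda>z. e a (fst z)) has_derivative (\<lambda>h. sg a * e (sig a) (fst z) * fst h)) (at z)"
    using has_derivative_compose[OF has_derivative_fst[OF has_derivative_ident]
        has_field_derivative_imp_has_derivative[OF e_deriv[of a "fst z"]]] by simp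
  have d2: "((\<lambda>z. e b (snd z)) has_derivative (\<lambda>h. sg b * e (sig b) (snd z) * snd h)) (at z)"
    using has_derivative_compose[OF has_derivative_snd[OF has_derivative_ident]
        has_field_derivative_imp_has_derivative[OF e_deriv[of b "snd z"]]] by simp
  have "((\<lambda>z. e a (fst z) * e b (snd z)) has_derivative
      (\<lambda>h. e a (fst z) * (sg b * e (sig b) (snd z) * snd h) + (sg a * e (sig a) (fst z) * fst h) * e b (snd z))) (at z)"
    by (rule has_derivative_mult[OF d1 d2])
  then show "(E p has_derivative (\<lambda>h. fst h * (sg (fst p) * E (sig (fst p), snd p) z) + snd h * (sg (snd p) * E (fst p, sig (snd p)) z))) (at z)"
    unfolding p E_def[abs_def] fst_conv snd_conv
    by (rule has_derivative_eq_rhs) (auto simp: fun_eq_iff algebra_simps)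
qed

lemma coef_g1:
  assumes "H1_weak_gradient u g1 g2"
  shows "integral\<^sup>L torus_measure (\<lambda>z. g1 z * E (a, b) z) = - sg a * integral\<^sup>L torus_measure (\<lambda>z. u z * E (sig a, b) z)"
proof -
  have "integral\<^sup>L torus_measure (\<lambda>z. u z * (sg a * E (sig a, b) z)) = - integral\<^sup>L torus_measure (\<lambda>z. g1 z * E (a, b) z)"
    using assms E_test[of "(a,b)"] unfolding H1_weak_gradient_def by auto
  moreover have "integral\<^sup>L torus_measure (\<lambda>z. u z * (sg a * E (sig a, b) z)) = sg a * integral\<^sup>L torus_measure (\<lambda>z. u z * E (sig a, b) z)"
    by (simp add: mult.left_commute)
  ultimately show ?thesis by simp
qed

lemma coef_g2:
  assumes "H1_weak_gradient u g1 g2"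
  shows "integral\<^sup>L torus_measure (\<lambda>z. g2 z * E (a, b) z) = - sg b * integral\<^sup>L torus_measure (\<lambda>z. u z * E (a, sig b) z)"
proof -
  have "integral\<^sup>L torus_measure (\<lambda>z. u z * (sg b * E (a, sig b) z)) = - integral\<^sup>L torus_measure (\<lambda>z. g2 z * E (a, b) z)"
    using assms E_test[of "(a,b)"] unfolding H1_weak_gradient_def by auto
  moreover have "integral\<^sup>L torus_measure (\<lambda>z. u z * (sg b * E (a, sig b) z)) = sg b * integral\<^sup>L torus_measure (\<lambda>z. u z * E (a, sig b) z)"
    by (simp add: mult.left_commute)
  ultimately show ?thesis by simp
qed

section \<open>Generic L2 approximation\<close>

definition L2 :: "'a measure \<Rightarrow> ('a \<Rightarrow> real) \<Rightarrow> bool" where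
  "L2 M f \<longleftrightarrow> f \<in> borel_measurable M \<and> integrable M (\<lambda>x. (f x)\<^sup>2)"

lemma abs_prod_le_sq: "\<bar>a * b\<bar> \<le> a\<^sup>2 + (b::real)\<^sup>2"
proof -
  have h: "0 \<le> (\<bar>a\<bar> - \<bar>b\<bar>)\<^sup>2" by simp
  have "(\<bar>a\<bar> - \<bar>b\<bar>)\<^sup>2 = a\<^sup>2 + b\<^sup>2 - 2 * (\<bar>a\<bar> * \<bar>b\<bar>)"
    by (simp add: power2_diff)
  moreover have "0 \<le> \<bar>a\<bar> * \<bar>b\<bar>" by simp
  ultimately show ?thesis using h unfolding abs_mult by linarith
qed

lemma sq_sum_le: "(a + b)\<^sup>2 \<le> 2 * a\<^sup>2 + 2 * (b::real)\<^sup>2"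
proof -
  have "0 \<le> (a - b)\<^sup>2" by simp
  then show ?thesis by (simp add: power2_eq_square algebra_simps)
qed

lemma sq_le_of_abs_le: "\<bar>y\<bar> \<le> B \<Longrightarrow> y\<^sup>2 \<le> (B::real)\<^sup>2"
  by (metis abs_ge_zero power2_abs power_mono)

lemma L2_prod_int:
  assumes "L2 M f" "L2 M g"
  shows "integrable M (\<lambda>x. f x * g x)"
proof (rule Bochner_Integration.integrable_bound[of _ "\<lambda>x. (f x)\<^sup>2 + (g x)\<^sup>2"])
  show "integrable M (\<lambda>x. (f x)\<^sup>2 + (g x)\<^sup>2)" using assms by (auto simp: L2_def)
  show "(\<lambda>x. f x * g x) \<in> borel_measurable M" using assms by (auto simp: L2_def)
  have "\<bar>f x * g x\<bar> \<le> (f x)\<^sup>2 + (g x)\<^sup>2" for x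
    by (rule abs_prod_le_sq)
  then show "AE x in M. norm (f x * g x) \<le> norm ((f x)\<^sup>2 + (g x)\<^sup>2)" by auto
qed

lemma L2_add: "L2 M f \<Longrightarrow> L2 M g \<Longrightarrow> L2 M (\<lambda>x. f x + g x)"
proof -
  assume a: "L2 M f" "L2 M g"
  have "(\<lambda>x. (f x + g x)\<^sup>2) = (\<lambda>x. (f x)\<^sup>2 + (g x)\<^sup>2 + 2 * (f x * g x))"
    by (auto simp: power2_sum fun_eq_iff)
  moreover have "integrable M (\<lambda>x. (f x)\<^sup>2 + (g x)\<^sup>2 + 2 * (f x * g x))"
    using L2_prod_int[OF a] a unfolding L2_def by auto
  ultimately show ?thesis using a unfolding L2_def by auto
qed

lemma L2_cmult: "L2 M f \<Longrightarrow> L2 M (\<lambda>x. c * f x)"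
  unfolding L2_def power_mult_distrib by auto

lemma L2_diff: "L2 M f \<Longrightarrow> L2 M g \<Longrightarrow> L2 M (\<lambda>x. f x - g x)"
  using L2_add[of M f "\<lambda>x. (-1) * g x"] L2_cmult[of M g "-1"] by simp

lemma L2_bounded:
  assumes "finite_measure M" "f \<in> borel_measurable M" "\<And>x. \<bar>f x\<bar> \<le> B"
  shows "L2 M f"
  unfolding L2_def
proof
  show "integrable M (\<lambda>x. (f x)\<^sup>2)"
  proof (rule integrable_bounded_fm[OF assms(1), where B="B\<^sup>2"])
    show "(\<lambda>x. (f x)\<^sup>2) \<in> borel_measurable M" using assms(2) by simp
    fix x
    have "\<bar>f x\<bar> \<le> B" by (rule assms(3))
    then have "(f x)\<^sup>2 \<le> B\<^sup>2" by (rule sq_le_of_abs_le)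
    then show "\<bar>(f x)\<^sup>2\<bar> \<le> B\<^sup>2" by simp
  qed
qed (rule assms(2))

lemma L2_indicator: "finite_measure M \<Longrightarrow> A \<in> sets M \<Longrightarrow> L2 M (indicator A :: _ \<Rightarrow> real)"
proof -
  assume a: "finite_measure M" "A \<in> sets M"
  show ?thesis
  proof (rule L2_bounded[OF a(1), where B=1])
    show "indicator A \<in> borel_measurable M" using a(2) by (rule borel_measurable_indicator)
    fix x show "\<bar>indicator A x :: real\<bar> \<le> 1" by (simp split: split_indicator)
  qed
qed

lemma sq_tri:
  assumes "L2 M f" "L2 M g"
  shows "integral\<^sup>L M (\<lambda>x. (f x + g x)\<^sup>2) \<le> 2 * integral\<^sup>L M (\<lambda>x. (f x)\<^sup>2) + 2 * integral\<^sup>L M (\<lambda>x. (g x)\<^sup>2)"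
proof -
  have "integral\<^sup>L M (\<lambda>x. (f x + g x)\<^sup>2) \<le> integral\<^sup>L M (\<lambda>x. 2 * (f x)\<^sup>2 + 2 * (g x)\<^sup>2)"
  proof (rule integral_mono)
    show "integrable M (\<lambda>x. (f x + g x)\<^sup>2)" using L2_add[OF assms] by (auto simp: L2_def)
    show "integrable M (\<lambda>x. 2 * (f x)\<^sup>2 + 2 * (g x)\<^sup>2)" using assms by (auto simp: L2_def)
    fix x show "(f x + g x)\<^sup>2 \<le> 2 * (f x)\<^sup>2 + 2 * (g x)\<^sup>2"
      by (rule sq_sum_le)
  qed
  also have "\<dots> = 2 * integral\<^sup>L M (\<lambda>x. (f x)\<^sup>2) + 2 * integral\<^sup>L M (\<lambda>x. (g x)\<^sup>2)"
    using assms by (auto simp: L2_def)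
  finally show ?thesis .
qed

lemma sq_tri3:
  assumes "L2 M f" "L2 M g" "L2 M h"
  shows "integral\<^sup>L M (\<lambda>x. (f x - h x)\<^sup>2) \<le> 2 * integral\<^sup>L M (\<lambda>x. (f x - g x)\<^sup>2) + 2 * integral\<^sup>L M (\<lambda>x. (g x - h x)\<^sup>2)"
  using sq_tri[OF L2_diff[OF assms(1,2)] L2_diff[OF assms(2,3)]] by simp

lemma lim_ex: "X \<longlonglongrightarrow> (L::real) \<Longrightarrow> 0 < r \<Longrightarrow> \<exists>n. \<bar>X n - L\<bar> < r"
proof -
  assume "X \<longlonglongrightarrow> L" "0 < r"
  from LIMSEQ_D[OF this] obtain no where "\<forall>n\<ge>no. norm (X n - L) < r" by blast
  then have "norm (X no - L) < r" by blast
  then show ?thesis by (intro exI[of _ no]) simp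
qed

definition goodT :: "'a measure \<Rightarrow> ('a \<Rightarrow> real) set \<Rightarrow> bool" where
  "goodT M T \<longleftrightarrow> finite_measure M \<and> (\<forall>t\<in>T. L2 M t) \<and> (\<lambda>x. 1) \<in> T \<and>
     (\<forall>s\<in>T. \<forall>t\<in>T. (\<lambda>x. s x + t x) \<in> T) \<and> (\<forall>t\<in>T. \<forall>c. (\<lambda>x. c * t x) \<in> T)"

definition apx :: "'a measure \<Rightarrow> ('a \<Rightarrow> real) set \<Rightarrow> ('a \<Rightarrow> real) \<Rightarrow> bool" where
  "apx M T f \<longleftrightarrow> (\<forall>\<epsilon>>0. \<exists>t\<in>T. integral\<^sup>L M (\<lambda>x. (f x - t x)\<^sup>2) < \<epsilon>)"

lemma apx_T: "t \<in> T \<Longrightarrow> apx M T t"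
  unfolding apx_def by (auto intro!: bexI[of _ t])

lemma goodT_const: "goodT M T \<Longrightarrow> (\<lambda>x. c) \<in> T"
proof -
  assume G: "goodT M T"
  then have "\<forall>t\<in>T. \<forall>c. (\<lambda>x. c * t x) \<in> T" "(\<lambda>x. 1) \<in> T" unfolding goodT_def by auto
  then have "\<forall>c. (\<lambda>x. c * (1::real)) \<in> T" by (rule bspec)
  then show ?thesis by simp
qed

lemma goodT_add: "goodT M T \<Longrightarrow> s \<in> T \<Longrightarrow> t \<in> T \<Longrightarrow> (\<lambda>x. s x + t x) \<in> T"
  unfolding goodT_def by blast

lemma goodT_cmult: "goodT M T \<Longrightarrow> t \<in> T \<Longrightarrow> (\<lambda>x. c * t x) \<in> T"
  unfolding goodT_def by blast

lemma goodT_L2: "goodT M T \<Longrightarrow> t \<in> T \<Longrightarrow> L2 M t"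
  unfolding goodT_def by blast

lemma apx_add:
  assumes G: "goodT M T" and "L2 M f" "L2 M g" "apx M T f" "apx M T g"
  shows "apx M T (\<lambda>x. f x + g x)"
  unfolding apx_def
proof (intro allI impI)
  fix \<epsilon> :: real assume "\<epsilon> > 0"
  then have e4: "\<epsilon>/4 > 0" by simp
  obtain s where s: "s \<in> T" "integral\<^sup>L M (\<lambda>x. (f x - s x)\<^sup>2) < \<epsilon>/4"
    using assms(4) e4 unfolding apx_def by blast
  obtain t where t: "t \<in> T" "integral\<^sup>L M (\<lambda>x. (g x - t x)\<^sup>2) < \<epsilon>/4"
    using assms(5) e4 unfolding apx_def by blast
  have Ls: "L2 M s" "L2 M t" using G s t by (auto simp: goodT_def)
  have "integral\<^sup>L M (\<lambda>x. (f x + g x - (s x + t x))\<^sup>2) = integral\<^sup>L M (\<lambda>x. ((f x - s x) + (g x - t x))\<^sup>2)"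
    by (simp add: algebra_simps)
  also have "\<dots> \<le> 2 * integral\<^sup>L M (\<lambda>x. (f x - s x)\<^sup>2) + 2 * integral\<^sup>L M (\<lambda>x. (g x - t x)\<^sup>2)"
    by (rule sq_tri) (use assms Ls in \<open>auto intro: L2_diff\<close>)
  also have "\<dots> < \<epsilon>" using s t by simp
  finally show "\<exists>t\<in>T. integral\<^sup>L M (\<lambda>x. (f x + g x - t x)\<^sup>2) < \<epsilon>"
    using goodT_add[OF G s(1) t(1)] by (intro bexI[of _ "\<lambda>x. s x + t x"])
qed

lemma apx_cmult:
  assumes G: "goodT M T" and "apx M T f"
  shows "apx M T (\<lambda>x. c * f x)"
  unfolding apx_def
proof (intro allI impI)
  fix \<epsilon> :: real assume ep: "\<epsilon> > 0"
  show "\<exists>t\<in>T. integral\<^sup>L M (\<lambda>x. (c * f x - t x)\<^sup>2) < \<epsilon>"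
  proof (cases "c = 0")
    case True
    have "(\<lambda>x. 0) \<in> T" using G goodT_const by blast
    then show ?thesis using True ep by (intro bexI[of _ "\<lambda>x. 0"]) auto
  next
    case False
    then have "\<epsilon> / c\<^sup>2 > 0" using ep by simp
    then obtain s where s: "s \<in> T" "integral\<^sup>L M (\<lambda>x. (f x - s x)\<^sup>2) < \<epsilon> / c\<^sup>2"
      using assms(2) unfolding apx_def by blast
    have "integral\<^sup>L M (\<lambda>x. (c * f x - c * s x)\<^sup>2) = c\<^sup>2 * integral\<^sup>L M (\<lambda>x. (f x - s x)\<^sup>2)"
      by (simp add: power_mult_distrib right_diff_distrib[symmetric])
    also have "\<dots> < \<epsilon>" using s False by (simp add: field_simps)
    finally show ?thesis using goodT_cmult[OF G s(1)] by (intro bexI[of _ "\<lambda>x. c * s x"])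
  qed
qed

lemma apx_sum:
  assumes G: "goodT M T" and "finite I" and "\<And>i. i \<in> I \<Longrightarrow> L2 M (f i) \<and> apx M T (f i)"
  shows "L2 M (\<lambda>x. \<Sum>i\<in>I. f i x) \<and> apx M T (\<lambda>x. \<Sum>i\<in>I. f i x)"
  using assms(2,3)
proof (induction I rule: finite_induct)
  case empty
  have "(\<lambda>x. 0) \<in> T" using G goodT_const by blast
  then have "apx M T (\<lambda>x. 0)" using apx_T by fastforce
  moreover have "L2 M (\<lambda>x. 0)" by (simp add: L2_def)
  ultimately show ?case by simp
next
  case (insert i I)
  then show ?case using apx_add[OF G, of "f i" "\<lambda>x. \<Sum>i\<in>I. f i x"] L2_add[of M "f i" "\<lambda>x. \<Sum>i\<in>I. f i x"]
    by simp
qed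

lemma apx_lim:
  assumes G: "goodT M T" and f: "L2 M f"
    and approx: "\<And>\<epsilon>. \<epsilon> > 0 \<Longrightarrow> \<exists>g. L2 M g \<and> apx M T g \<and> integral\<^sup>L M (\<lambda>x. (f x - g x)\<^sup>2) < \<epsilon>"
  shows "apx M T f"
  unfolding apx_def
proof (intro allI impI)
  fix \<epsilon> :: real assume "\<epsilon> > 0"
  then have e4: "\<epsilon>/4 > 0" by simp
  obtain g where g: "L2 M g" "apx M T g" "integral\<^sup>L M (\<lambda>x. (f x - g x)\<^sup>2) < \<epsilon>/4"
    using approx[OF e4] by blast
  obtain t where t: "t \<in> T" "integral\<^sup>L M (\<lambda>x. (g x - t x)\<^sup>2) < \<epsilon>/4"
    using g(2) e4 unfolding apx_def by blast
  have "L2 M t" using G t by (auto simp: goodT_def)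
  then have "integral\<^sup>L M (\<lambda>x. (f x - t x)\<^sup>2) \<le> 2 * integral\<^sup>L M (\<lambda>x. (f x - g x)\<^sup>2) + 2 * integral\<^sup>L M (\<lambda>x. (g x - t x)\<^sup>2)"
    using sq_tri3 f g(1) by blast
  also have "\<dots> < \<epsilon>" using g t by simp
  finally show "\<exists>t\<in>T. integral\<^sup>L M (\<lambda>x. (f x - t x)\<^sup>2) < \<epsilon>" using t by blast
qed

lemma apx_indicator_compl:
  assumes G: "goodT M T" and A: "A \<in> sets M" and ap: "apx M T (indicator A)"
  shows "apx M T (indicator (UNIV - A) :: _ \<Rightarrow> real)"
proof -
  have fm: "finite_measure M" using G by (simp add: goodT_def)
  have a1: "apx M T (\<lambda>x. 1)" by (rule apx_T[OF goodT_const[OF G]])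
  have a2: "apx M T (\<lambda>x. (-1) * indicator A x)" by (rule apx_cmult[OF G ap])
  have l1: "L2 M (\<lambda>x. 1)" by (rule goodT_L2[OF G goodT_const[OF G]])
  have l2: "L2 M (\<lambda>x. (-1) * indicator A x)" by (rule L2_cmult[OF L2_indicator[OF fm A]])
  have "apx M T (\<lambda>x. 1 + (-1) * indicator A x)"
    by (rule apx_add[OF G l1 l2 a1 a2])
  moreover have "(\<lambda>x. 1 + (-1) * indicator A x) = (indicator (UNIV - A) :: _ \<Rightarrow> real)"
    by (auto simp: fun_eq_iff split: split_indicator)
  ultimately show ?thesis by simp
qed

lemma apx_sets:
  assumes G: "goodT M T" and sp: "space M = UNIV" and sM: "sets M = sigma_sets UNIV Gen"
    and IS: "Int_stable Gen" and base: "\<And>A. A \<in> Gen \<Longrightarrow> apx M T (indicator A)"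
    and A: "A \<in> sets M"
  shows "apx M T (indicator A :: _ \<Rightarrow> real)"
proof -
  have fm: "finite_measure M" using G by (simp add: goodT_def)
  have GP: "Gen \<subseteq> Pow UNIV" by auto
  have AS: "A \<in> sigma_sets UNIV Gen" using A sM by simp
  have b: "\<And>A. A \<in> Gen \<Longrightarrow> apx M T (indicator A)" by (rule base)
  have emp: "apx M T (indicator {} :: _ \<Rightarrow> real)"
  proof -
    have eq: "(indicator {} :: _ \<Rightarrow> real) = (\<lambda>x. 0)" by (simp add: fun_eq_iff)
    show ?thesis unfolding eq using apx_T goodT_const[OF G] by blast
  qed
  have cmp: "\<And>A. A \<in> sigma_sets UNIV Gen \<Longrightarrow> apx M T (indicator A) \<Longrightarrow> apx M T (indicator (UNIV - A) :: _ \<Rightarrow> real)"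
    using apx_indicator_compl[OF G] sM by simp
  have un: "apx M T (indicator (\<Union>(range AA)) :: _ \<Rightarrow> real)"
    if union: "disjoint_family AA" "range AA \<subseteq> sigma_sets UNIV Gen" "\<And>i. apx M T (indicator (AA i) :: _ \<Rightarrow> real)" for AA :: "nat \<Rightarrow> _"
  proof -
    have AM: "AA i \<in> sets M" for i using union(2) sM by auto
    define U where "U n = (\<Union>i<n. AA i)" for n
    have UM: "U n \<in> sets M" for n unfolding U_def using AM by auto
    have UU: "(\<Union>i. AA i) \<in> sets M" using AM by auto
    have indU: "(indicator (U n) :: _ \<Rightarrow> real) = (\<lambda>x. \<Sum>i<n. indicator (AA i) x)" for n
      unfolding U_def fun_eq_iff
      by (intro allI indicator_UN_disjoint) (use union(1) in \<open>auto simp: disjoint_family_on_def\<close>)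
    have apU: "L2 M (indicator (U n)) \<and> apx M T (indicator (U n))" for n
      unfolding indU by (rule apx_sum[OF G]) (auto intro: L2_indicator[OF fm AM] union(3))
    show ?thesis
    proof (rule apx_lim[OF G L2_indicator[OF fm UU]])
      fix \<epsilon> :: real assume ep: "\<epsilon> > 0"
      have inc: "incseq U" unfolding U_def incseq_def by (auto intro: order_less_le_trans)
      have UnU: "(\<Union>n. U n) = (\<Union>i. AA i)" unfolding U_def by auto
      have lim: "(\<lambda>n. measure M (U n)) \<longlonglongrightarrow> measure M (\<Union>i. AA i)"
        using finite_measure.finite_Lim_measure_incseq[OF fm _ inc] UM UnU by auto
      then obtain n where n: "\<bar>measure M (U n) - measure M (\<Union>i. AA i)\<bar> < \<epsilon>"
        using lim_ex ep by blast
      have sub: "U n \<subseteq> (\<Union>i. AA i)" unfolding U_def by auto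
      have "integral\<^sup>L M (\<lambda>x. (indicator (\<Union>i. AA i) x - indicator (U n) x :: real)\<^sup>2) = integral\<^sup>L M (indicator ((\<Union>i. AA i) - U n))"
        using sub by (intro Bochner_Integration.integral_cong) (auto split: split_indicator)
      also have "\<dots> = measure M ((\<Union>i. AA i) - U n)"
        using UU UM by simp
      also have "\<dots> = measure M (\<Union>i. AA i) - measure M (U n)"
        using finite_measure.finite_measure_Diff[OF fm UU UM sub] by simp
      also have "\<dots> < \<epsilon>" using n by simp
      finally show "\<exists>g. L2 M g \<and> apx M T g \<and> integral\<^sup>L M (\<lambda>x. (indicator (\<Union>(range AA)) x - g x)\<^sup>2) < \<epsilon>"
        using apU[of n] by blast
    qed
  qed
  show ?thesis
  proof (rule sigma_sets_induct_disjoint[OF IS GP AS, where P="\<lambda>A. apx M T (indicator A)"])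
    show "\<And>A. A \<in> Gen \<Longrightarrow> apx M T (indicator A :: _ \<Rightarrow> real)" by (rule b)
    show "apx M T (indicator {} :: _ \<Rightarrow> real)" by (rule emp)
    show "\<And>A. A \<in> sigma_sets UNIV Gen \<Longrightarrow> apx M T (indicator A :: _ \<Rightarrow> real) \<Longrightarrow> apx M T (indicator (UNIV - A))"
      by (rule cmp)
    show "\<And>A :: nat \<Rightarrow> _. disjoint_family A \<Longrightarrow> range A \<subseteq> sigma_sets UNIV Gen \<Longrightarrow> (\<And>i. apx M T (indicator (A i) :: _ \<Rightarrow> real)) \<Longrightarrow> apx M T (indicator (\<Union> (range A)))"
      by (rule un)
  qed
qed

lemma apx_all:
  assumes G: "goodT M T" and sp: "space M = UNIV"
    and ind: "\<And>A. A \<in> sets M \<Longrightarrow> apx M T (indicator A)"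
    and f: "L2 M f"
  shows "apx M T f"
proof -
  have fm: "finite_measure M" using G by (simp add: goodT_def)
  have fmeas: "f \<in> borel_measurable M" and fint: "integrable M (\<lambda>x. (f x)\<^sup>2)" using f by (auto simp: L2_def)
  from borel_measurable_implies_sequence_metric[OF fmeas, of 0] obtain F where
    F1: "\<forall>i. simple_function M (F i)" and F2: "\<forall>x\<in>space M. (\<lambda>i. F i x) \<longlonglongrightarrow> f x"
    and F3: "\<forall>i. \<forall>x\<in>space M. dist (F i x) 0 \<le> 2 * dist (f x) 0" by blast
  have Fs: "simple_function M (F i)" for i using F1 by blast
  have Fl: "(\<lambda>i. F i x) \<longlonglongrightarrow> f x" for x using F2 sp by blast
  have Fb': "\<bar>F i x\<bar> \<le> 2 * \<bar>f x\<bar>" for i x using F3 sp by (simp add: dist_real_def)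
  have Fmeas: "F i \<in> borel_measurable M" for i by (rule borel_measurable_simple_function[OF Fs])
  have FL2: "L2 M (F i)" for i
    unfolding L2_def
  proof
    show "integrable M (\<lambda>x. (F i x)\<^sup>2)"
    proof (rule Bochner_Integration.integrable_bound[of _ "\<lambda>x. 4 * (f x)\<^sup>2"])
      show "integrable M (\<lambda>x. 4 * (f x)\<^sup>2)" using fint by simp
      show "(\<lambda>x. (F i x)\<^sup>2) \<in> borel_measurable M" using Fmeas by simp
      have "(F i x)\<^sup>2 \<le> (2 * \<bar>f x\<bar>)\<^sup>2" for x
      proof -
        have "\<bar>F i x\<bar> \<le> 2 * \<bar>f x\<bar>" by (rule Fb')
        then show ?thesis by (rule sq_le_of_abs_le)
      qed
      then show "AE x in M. norm ((F i x)\<^sup>2) \<le> norm (4 * (f x)\<^sup>2)"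
        by (auto simp: power_mult_distrib)
    qed
  qed (rule Fmeas)
  have Fapx: "apx M T (F i)" for i
  proof -
    have rep0: "F i x = (\<Sum>y\<in>F i ` space M. indicator (F i -` {y} \<inter> space M) x *\<^sub>R y)" for x
      by (rule simple_function_indicator_representation_banach[OF Fs[of i]]) (simp add: sp)
    have rep1: "F i x = (\<Sum>y\<in>F i ` space M. y * indicator (F i -` {y} \<inter> space M) x)" for x
      unfolding rep0[of x] by (simp only: real_scaleR_def mult.commute)
    have rep: "F i = (\<lambda>x. \<Sum>y\<in>F i ` space M. y * indicator (F i -` {y} \<inter> space M) x)"
      by (rule ext) (rule rep1)
    have fin: "finite (F i ` space M)" by (rule simple_functionD(1)[OF Fs[of i]])
    have "L2 M (\<lambda>x. \<Sum>y\<in>F i ` space M. y * indicator (F i -` {y} \<inter> space M) x) \<and>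
          apx M T (\<lambda>x. \<Sum>y\<in>F i ` space M. y * indicator (F i -` {y} \<inter> space M) x)"
    proof (rule apx_sum[OF G fin])
      fix y
      have S: "F i -` {y} \<inter> space M \<in> sets M" by (rule simple_functionD(2)[OF Fs[of i]])
      show "L2 M (\<lambda>x. y * indicator (F i -` {y} \<inter> space M) x) \<and> apx M T (\<lambda>x. y * indicator (F i -` {y} \<inter> space M) x)"
        using L2_cmult[OF L2_indicator[OF fm S]] apx_cmult[OF G ind[OF S]] by auto
    qed
    then have "apx M T (\<lambda>x. \<Sum>y\<in>F i ` space M. y * indicator (F i -` {y} \<inter> space M) x)" by blast
    then show ?thesis by (simp only: rep[symmetric])
  qed
  show ?thesis
  proof (rule apx_lim[OF G f])
    fix \<epsilon> :: real assume ep: "\<epsilon> > 0"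
    have "(\<lambda>i. integral\<^sup>L M (\<lambda>x. (f x - F i x)\<^sup>2)) \<longlonglongrightarrow> integral\<^sup>L M (\<lambda>x. 0)"
    proof (rule integral_dominated_convergence[where w="\<lambda>x. 9 * (f x)\<^sup>2"])
      show "(\<lambda>x. 0::real) \<in> borel_measurable M" by simp
      show "(\<lambda>x. (f x - F i x)\<^sup>2) \<in> borel_measurable M" for i using fmeas Fmeas by simp
      show "integrable M (\<lambda>x. 9 * (f x)\<^sup>2)" using fint by simp
      have "(\<lambda>i. (f x - F i x)\<^sup>2) \<longlonglongrightarrow> (f x - f x)\<^sup>2" for x
        by (intro tendsto_intros Fl)
      then show "AE x in M. (\<lambda>i. (f x - F i x)\<^sup>2) \<longlonglongrightarrow> 0" by simp
      fix i
      have "(f x - F i x)\<^sup>2 \<le> (3 * \<bar>f x\<bar>)\<^sup>2" for x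
      proof -
        have "\<bar>f x - F i x\<bar> \<le> 3 * \<bar>f x\<bar>" using Fb'[of i x] abs_triangle_ineq4[of "f x" "F i x"] by linarith
        then show ?thesis by (rule sq_le_of_abs_le)
      qed
      then show "AE x in M. norm ((f x - F i x)\<^sup>2) \<le> 9 * (f x)\<^sup>2"
        by (auto simp: power_mult_distrib)
    qed
    then have "(\<lambda>i. integral\<^sup>L M (\<lambda>x. (f x - F i x)\<^sup>2)) \<longlonglongrightarrow> 0" by simp
    then obtain i where "\<bar>integral\<^sup>L M (\<lambda>x. (f x - F i x)\<^sup>2) - 0\<bar> < \<epsilon>"
      using lim_ex ep by blast
    then show "\<exists>g. L2 M g \<and> apx M T g \<and> integral\<^sup>L M (\<lambda>x. (f x - g x)\<^sup>2) < \<epsilon>"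
      using FL2[of i] Fapx[of i] by auto
  qed
qed

section \<open>Projection identity\<close>

lemma proj_identity:
  assumes u: "L2 M u" and fin: "finite F" and Phi: "\<And>p. p \<in> F \<Longrightarrow> L2 M (Phi p)"
    and orth: "\<And>p q. p \<in> F \<Longrightarrow> q \<in> F \<Longrightarrow> integral\<^sup>L M (\<lambda>x. Phi p x * Phi q x) = (if p = q then 1 else 0)"
  shows "integral\<^sup>L M (\<lambda>x. (u x - (\<Sum>p\<in>F. d p * Phi p x))\<^sup>2) =
     integral\<^sup>L M (\<lambda>x. (u x)\<^sup>2) - 2 * (\<Sum>p\<in>F. d p * integral\<^sup>L M (\<lambda>x. u x * Phi p x)) + (\<Sum>p\<in>F. (d p)\<^sup>2)"
proof -
  have iuP: "integrable M (\<lambda>x. u x * Phi p x)" if "p \<in> F" for p using L2_prod_int[OF u Phi[OF that]] .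
  have iPP: "integrable M (\<lambda>x. Phi p x * Phi q x)" if "p \<in> F" "q \<in> F" for p q using L2_prod_int[OF Phi[OF that(1)] Phi[OF that(2)]] .
  have iu: "integrable M (\<lambda>x. (u x)\<^sup>2)" using u by (simp add: L2_def)
  have exp: "(u x - (\<Sum>p\<in>F. d p * Phi p x))\<^sup>2 = (u x)\<^sup>2 - 2 * (\<Sum>p\<in>F. d p * (u x * Phi p x)) + (\<Sum>p\<in>F. \<Sum>q\<in>F. d p * d q * (Phi p x * Phi q x))" for x
    by (simp add: power2_diff power2_eq_square sum_distrib_left sum_distrib_right sum_product algebra_simps)
  have i1: "integrable M (\<lambda>x. \<Sum>p\<in>F. d p * (u x * Phi p x))" using iuP by auto
  have i2: "integrable M (\<lambda>x. \<Sum>p\<in>F. \<Sum>q\<in>F. d p * d q * (Phi p x * Phi q x))" using iPP by auto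
  have "integral\<^sup>L M (\<lambda>x. (u x - (\<Sum>p\<in>F. d p * Phi p x))\<^sup>2) =
     integral\<^sup>L M (\<lambda>x. (u x)\<^sup>2 - 2 * (\<Sum>p\<in>F. d p * (u x * Phi p x)) + (\<Sum>p\<in>F. \<Sum>q\<in>F. d p * d q * (Phi p x * Phi q x)))"
    by (simp only: exp)
  also have "\<dots> = integral\<^sup>L M (\<lambda>x. (u x)\<^sup>2) - 2 * integral\<^sup>L M (\<lambda>x. \<Sum>p\<in>F. d p * (u x * Phi p x)) + integral\<^sup>L M (\<lambda>x. \<Sum>p\<in>F. \<Sum>q\<in>F. d p * d q * (Phi p x * Phi q x))"
    using iu i1 i2 by simp
  also have "integral\<^sup>L M (\<lambda>x. \<Sum>p\<in>F. d p * (u x * Phi p x)) = (\<Sum>p\<in>F. d p * integral\<^sup>L M (\<lambda>x. u x * Phi p x))"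
    using iuP by (simp add: integral_sum)
  also have "integral\<^sup>L M (\<lambda>x. \<Sum>p\<in>F. \<Sum>q\<in>F. d p * d q * (Phi p x * Phi q x)) = (\<Sum>p\<in>F. \<Sum>q\<in>F. d p * d q * (if p = q then 1 else 0))"
    using iPP orth by (simp add: integral_sum integrable_sum)
  also have "\<dots> = (\<Sum>p\<in>F. (d p)\<^sup>2)"
  proof (rule sum.cong[OF refl])
    fix p assume p: "p \<in> F"
    have "(\<Sum>q\<in>F. d p * d q * (if p = q then 1 else 0)) = (\<Sum>q\<in>F. if q = p then d p * d p else 0)"
      by (rule sum.cong) auto
    also have "\<dots> = d p * d p" using fin p by simp
    finally show "(\<Sum>q\<in>F. d p * d q * (if p = q then 1 else 0)) = (d p)\<^sup>2" by (simp add: power2_eq_square)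
  qed
  finally show ?thesis .
qed

section \<open>One-dimensional trigonometric polynomials\<close>

inductive_set trig1 :: "(real \<Rightarrow> real) set" where
  basis: "e a \<in> trig1"
| add: "f \<in> trig1 \<Longrightarrow> g \<in> trig1 \<Longrightarrow> (\<lambda>x. f x + g x) \<in> trig1"
| smult: "f \<in> trig1 \<Longrightarrow> (\<lambda>x. c * f x) \<in> trig1"

lemma trig1_const: "(\<lambda>x. c) \<in> trig1"
  using trig1.smult[OF trig1.basis[of 0], of c] by (simp add: e_def)

lemma trig1_cos_nat: "(\<lambda>x. cos (real n * x)) \<in> trig1"
proof (cases "n = 0")
  case True then show ?thesis using trig1_const[of 1] by simp
next
  case False
  have o: "odd (2*n - 1)" "2*n - 1 \<noteq> 0" "freq (2*n-1) = n" using False by (auto simp: freq_def)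
  have "(\<lambda>x. (1 / sqrt 2) * e (2*n-1) x) \<in> trig1" by (intro trig1.smult trig1.basis)
  moreover have "(\<lambda>x. (1 / sqrt 2) * e (2*n-1) x) = (\<lambda>x. cos (real n * x))"
    using o by (auto simp: e_def fun_eq_iff)
  ultimately show ?thesis by simp
qed

lemma trig1_sin_nat: "(\<lambda>x. sin (real n * x)) \<in> trig1"
proof (cases "n = 0")
  case True then show ?thesis using trig1_const[of 0] by simp
next
  case False
  have o: "even (2*n)" "2*n \<noteq> 0" "freq (2*n) = n" using False by (auto simp: freq_def)
  have "(\<lambda>x. (1 / sqrt 2) * e (2*n) x) \<in> trig1" by (intro trig1.smult trig1.basis)
  moreover have "(\<lambda>x. (1 / sqrt 2) * e (2*n) x) = (\<lambda>x. sin (real n * x))"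
    using o by (auto simp: e_def fun_eq_iff)
  ultimately show ?thesis by simp
qed

lemma trig1_cos_int: "(\<lambda>x. cos (of_int r * x)) \<in> trig1"
proof (cases "r \<ge> 0")
  case True
  then show ?thesis using trig1_cos_nat[of "nat r"] by simp
next
  case False
  then show ?thesis using trig1_cos_nat[of "nat (-r)"] by simp
qed

lemma trig1_sin_int: "(\<lambda>x. sin (of_int r * x)) \<in> trig1"
proof (cases "r \<ge> 0")
  case True
  then show ?thesis using trig1_sin_nat[of "nat r"] by simp
next
  case False
  then have "(\<lambda>x. sin (of_int r * x)) = (\<lambda>x. (-1) * sin (real (nat (-r)) * x))" by (simp add: fun_eq_iff)
  then show ?thesis using trig1.smult[OF trig1_sin_nat[of "nat (-r)"], of "-1"] by simp
qed

lemma trig1_cc: "(\<lambda>x. cos (real n * x) * cos (real m * x)) \<in> trig1"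
proof -
  have "(\<lambda>x. (1/2) * cos (of_int (int n - int m) * x) + (1/2) * cos (of_int (int n + int m) * x)) \<in> trig1"
    by (intro trig1.add trig1.smult trig1_cos_int)
  moreover have "(\<lambda>x. (1/2) * cos (of_int (int n - int m) * x) + (1/2) * cos (of_int (int n + int m) * x)) = (\<lambda>x. cos (real n * x) * cos (real m * x))"
  proof (rule ext)
    fix x show "(1/2) * cos (of_int (int n - int m) * x) + (1/2) * cos (of_int (int n + int m) * x) = cos (real n * x) * cos (real m * x)"
      using prod_cc[of n x m] by linarith
  qed
  ultimately show ?thesis by simp
qed

lemma trig1_ss: "(\<lambda>x. sin (real n * x) * sin (real m * x)) \<in> trig1"
proof -
  have "(\<lambda>x. (1/2) * cos (of_int (int n - int m) * x) + (-1/2) * cos (of_int (int n + int m) * x)) \<in> trig1"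
    by (intro trig1.add trig1.smult trig1_cos_int)
  moreover have "(\<lambda>x. (1/2) * cos (of_int (int n - int m) * x) + (-1/2) * cos (of_int (int n + int m) * x)) = (\<lambda>x. sin (real n * x) * sin (real m * x))"
  proof (rule ext)
    fix x show "(1/2) * cos (of_int (int n - int m) * x) + (-1/2) * cos (of_int (int n + int m) * x) = sin (real n * x) * sin (real m * x)"
      using prod_ss[of n x m] by linarith
  qed
  ultimately show ?thesis by simp
qed

lemma trig1_cs: "(\<lambda>x. cos (real n * x) * sin (real m * x)) \<in> trig1"
proof -
  have "(\<lambda>x. (1/2) * sin (of_int (int m + int n) * x) + (1/2) * sin (of_int (int m - int n) * x)) \<in> trig1"
    by (intro trig1.add trig1.smult trig1_sin_int)
  moreover have "(\<lambda>x. (1/2) * sin (of_int (int m + int n) * x) + (1/2) * sin (of_int (int m - int n) * x)) = (\<lambda>x. cos (real n * x) * sin (real m * x))"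
  proof (rule ext)
    fix x show "(1/2) * sin (of_int (int m + int n) * x) + (1/2) * sin (of_int (int m - int n) * x) = cos (real n * x) * sin (real m * x)"
      using prod_cs[of n x m] by linarith
  qed
  ultimately show ?thesis by simp
qed

lemma e_cases: "e a = (\<lambda>x. 1) \<or> e a = (\<lambda>x. sqrt 2 * cos (real (freq a) * x)) \<or> e a = (\<lambda>x. sqrt 2 * sin (real (freq a) * x))"
  by (cases "a = 0"; cases "odd a") (simp_all add: e_def[abs_def])

lemma trig1_ee: "(\<lambda>x. e a x * e b x) \<in> trig1"
proof -
  have cc: "(\<lambda>x. 2 * (cos (real n * x) * cos (real m * x))) \<in> trig1" for n m by (intro trig1.smult trig1_cc)
  have ss: "(\<lambda>x. 2 * (sin (real n * x) * sin (real m * x))) \<in> trig1" for n m by (intro trig1.smult trig1_ss)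
  have cs: "(\<lambda>x. 2 * (cos (real n * x) * sin (real m * x))) \<in> trig1" for n m by (intro trig1.smult trig1_cs)
  have sc: "(\<lambda>x. 2 * (sin (real m * x) * cos (real n * x))) \<in> trig1" for n m
    using cs[of n m] by (simp add: mult.commute)
  have c1: "(\<lambda>x. sqrt 2 * cos (real n * x)) \<in> trig1" for n by (intro trig1.smult trig1_cos_nat)
  have s1: "(\<lambda>x. sqrt 2 * sin (real n * x)) \<in> trig1" for n by (intro trig1.smult trig1_sin_nat)
  show ?thesis
    using e_cases[of a] e_cases[of b]
    by (elim disjE) (simp_all add: sq2 cc ss cs sc c1 s1 trig1_const)
qed

lemma trig1_mult: "f \<in> trig1 \<Longrightarrow> g \<in> trig1 \<Longrightarrow> (\<lambda>x. f x * g x) \<in> trig1"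
proof (induction f rule: trig1.induct)
  case (basis a)
  show ?case using basis
  proof (induction g rule: trig1.induct)
    case (basis b) then show ?case by (rule trig1_ee)
  next
    case (add f g) then show ?case using trig1.add[OF add.IH] by (simp add: distrib_left)
  next
    case (smult f c) then show ?case using trig1.smult[OF smult.IH, of c] by (simp add: mult.left_commute)
  qed
next
  case (add f1 f2) then show ?case using trig1.add[OF add.IH] by (simp add: distrib_right)
next
  case (smult f c) then show ?case using trig1.smult[OF smult.IH, of c] by (simp add: mult.assoc)
qed

lemma trig1_cont_bdd: "t \<in> trig1 \<Longrightarrow> continuous_on UNIV t \<and> (\<exists>B. \<forall>x. \<bar>t x\<bar> \<le> B)"
proof (induction t rule: trig1.induct)
  case (basis a) then show ?case using e_cont e_bound by blast
next
  case (add f g)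
  then obtain B1 B2 where "\<forall>x. \<bar>f x\<bar> \<le> B1" "\<forall>x. \<bar>g x\<bar> \<le> B2" by blast
  then have "\<forall>x. \<bar>f x + g x\<bar> \<le> B1 + B2"
  proof (intro allI)
    fix x assume "\<forall>x. \<bar>f x\<bar> \<le> B1" "\<forall>x. \<bar>g x\<bar> \<le> B2"
    then have "\<bar>f x\<bar> \<le> B1" "\<bar>g x\<bar> \<le> B2" by blast+
    then show "\<bar>f x + g x\<bar> \<le> B1 + B2" using abs_triangle_ineq[of "f x" "g x"] by linarith
  qed
  then show ?case using add by (auto intro!: continuous_intros)
next
  case (smult f c)
  then obtain B where B: "\<forall>x. \<bar>f x\<bar> \<le> B" by blast
  then have "\<forall>x. \<bar>c * f x\<bar> \<le> \<bar>c\<bar> * B" by (simp add: abs_mult mult_left_mono)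
  then show ?case using smult by (auto intro!: continuous_intros)
qed

lemma trig1_meas: "t \<in> trig1 \<Longrightarrow> t \<in> borel_measurable borel"
  using trig1_cont_bdd borel_measurable_continuous_onI by blast

lemma goodT_trig1: "goodT nu trig1"
  unfolding goodT_def
proof (intro conjI ballI allI)
  show "finite_measure nu" by (rule fm_nu)
  fix t assume t: "t \<in> trig1"
  then obtain B where "\<forall>x. \<bar>t x\<bar> \<le> B" using trig1_cont_bdd by blast
  then show "L2 nu t" using trig1_meas[OF t] by (intro L2_bounded[OF fm_nu]) auto
next
  show "(\<lambda>x. 1) \<in> trig1" by (rule trig1_const)
qed (auto intro: trig1.add trig1.smult)

section \<open>Stone-Weierstrass on the circle\<close>

lemma polyfun_trig1:
  fixes g :: "complex \<Rightarrow> real"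
  assumes "real_polynomial_function g"
  shows "(\<lambda>x. g (cis x)) \<in> trig1"
  using assms
proof (induction g rule: real_polynomial_function.induct)
  case (linear g)
  have "g z = Re z * g 1 + Im z * g \<i>" for z
  proof -
    have "z = Re z *\<^sub>R 1 + Im z *\<^sub>R \<i>" by (simp add: complex_eq_iff)
    then have "g z = g (Re z *\<^sub>R 1 + Im z *\<^sub>R \<i>)" by simp
    also have "\<dots> = Re z * g 1 + Im z * g \<i>"
    proof -
      have lin: "linear g" using linear.hyps by (rule bounded_linear.linear)
      show ?thesis by (simp add: linear_add[OF lin] linear_scale[OF lin])
    qed
    finally show ?thesis .
  qed
  note gz = this
  have "(\<lambda>x. g (cis x)) = (\<lambda>x. g 1 * cos (real 1 * x) + g \<i> * sin (real 1 * x))"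
  proof (rule ext)
    fix x
    have "g (cis x) = Re (cis x) * g 1 + Im (cis x) * g \<i>" by (rule gz)
    then show "g (cis x) = g 1 * cos (real 1 * x) + g \<i> * sin (real 1 * x)" by (simp add: mult.commute)
  qed
  moreover have "(\<lambda>x. g 1 * cos (real 1 * x) + g \<i> * sin (real 1 * x)) \<in> trig1"
    by (intro trig1.add trig1.smult trig1_cos_nat trig1_sin_nat)
  ultimately show ?case by simp
next
  case (const c) then show ?case by (rule trig1_const)
next
  case (add f g) show ?case by (rule trig1.add[OF add.IH])
next
  case (mult f g) show ?case by (rule trig1_mult[OF mult.IH])
qed

lemma sw_circle:
  fixes \<tau> :: "real \<Rightarrow> real"
  assumes cont: "continuous_on UNIV \<tau>" and d: "0 < \<delta>" "\<delta> < pi/2"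
    and van: "\<And>x. pi - \<delta> \<le> \<bar>x\<bar> \<Longrightarrow> \<tau> x = 0" and ep: "\<epsilon> > 0"
  shows "\<exists>t\<in>trig1. \<forall>x\<in>{-pi..pi}. \<bar>\<tau> x - t x\<bar> < \<epsilon>"
proof -
  define T where "T z = \<tau> (Arg z)" for z
  have cd: "-cos \<delta> < 0" using d by (simp add: cos_gt_zero_pi)
  have cd1: "cos \<delta> < 1" using cos_monotone_0_pi[of 0 \<delta>] d by simp
  have zero: "T w = 0" if "Re w / cmod w < - cos \<delta>" for w
  proof -
    have w0: "w \<noteq> 0" using that cd by auto
    have "\<not> \<bar>Arg w\<bar> < pi - \<delta>"
    proof
      assume a: "\<bar>Arg w\<bar> < pi - \<delta>"
      have "cos (pi - \<delta>) < cos \<bar>Arg w\<bar>"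
        using a d by (intro cos_monotone_0_pi) auto
      then have "- cos \<delta> < cos (Arg w)" by simp
      then show False using that cos_Arg[OF w0] by simp
    qed
    then show ?thesis unfolding T_def by (intro van) simp
  qed
  have contT: "continuous_on (sphere 0 1) T"
  proof (rule continuous_at_imp_continuous_on, intro ballI)
    fix z :: complex assume z: "z \<in> sphere 0 1"
    then have z0: "z \<noteq> 0" by auto
    show "isCont T z"
    proof (cases "z \<in> \<real>\<^sub>\<le>\<^sub>0")
      case False
      have "isCont Arg z" by (rule continuous_at_Arg[OF False])
      moreover have "isCont \<tau> (Arg z)" using cont by (simp add: continuous_on_eq_continuous_at)
      ultimately show ?thesis unfolding T_def[abs_def] by (rule isCont_o2)
    next
      case True
      then have "Re z < 0" "Im z = 0" using z0 by (auto simp: nonpos_Reals_def complex_eq_iff)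
      then have rz: "Re z / cmod z = -1" using z by (auto simp: cmod_def)
      have "((\<lambda>w. Re w / cmod w) \<longlongrightarrow> Re z / cmod z) (at z)"
        using z0 by (intro tendsto_intros) auto
      moreover have "Re z / cmod z < - cos \<delta>" using rz cd1 by simp
      ultimately have ev: "eventually (\<lambda>w. Re w / cmod w < - cos \<delta>) (at z)"
        by (rule order_tendstoD(2))
      have "eventually (\<lambda>w. T w = 0) (at z)" by (rule eventually_mono[OF ev zero])
      then have "(T \<longlongrightarrow> 0) (at z)" by (rule tendsto_eventually)
      moreover have "T z = 0" using zero rz cd1 by simp
      ultimately show ?thesis unfolding isCont_def by simp
    qed
  qed
  obtain g where g: "real_polynomial_function g" "\<And>z. z \<in> sphere 0 1 \<Longrightarrow> \<bar>T z - g z\<bar> < \<epsilon>"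
    using Stone_Weierstrass_real_polynomial_function[OF compact_sphere contT ep] by blast
  show ?thesis
  proof (intro bexI[of _ "\<lambda>x. g (cis x)"] ballI)
    fix x :: real assume x: "x \<in> {-pi..pi}"
    have Tc: "T (cis x) = \<tau> x"
    proof (cases "x = -pi")
      case True
      have "cis x = cis pi" using True by (simp add: cis.ctr)
      then have "Arg (cis x) = pi" using Arg_cis[of pi] by simp
      moreover have "\<tau> pi = 0" "\<tau> (-pi) = 0" using van d by auto
      ultimately show ?thesis using True by (simp add: T_def)
    next
      case False
      then have "Arg (cis x) = x" using x by (intro Arg_cis) auto
      then show ?thesis by (simp add: T_def)
    qed
    have "cis x \<in> sphere 0 1" by simp
    then show "\<bar>\<tau> x - g (cis x)\<bar> < \<epsilon>" using g(2) Tc by metis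
  qed (rule polyfun_trig1[OF g(1)])
qed

section \<open>One-dimensional density\<close>

lemma AE_nu: "AE x in nu. -pi \<le> x \<and> x < pi"
  unfolding nu_def by (rule AE_uniform_measureI) auto

lemma measure_nu_Icc:
  assumes "c \<le> d"
  shows "measure nu {c..d} \<le> (d - c) / (2*pi)"
proof -
  have "measure nu {c..d} = measure lborel ({-pi..<pi} \<inter> {c..d}) / measure lborel {-pi..<pi}"
    unfolding nu_def by (rule measure_uniform_measure) (auto simp: emeasure_I1)
  also have "measure lborel {-pi..<pi} = 2 * pi" by simp
  also have "measure lborel ({-pi..<pi} \<inter> {c..d}) \<le> measure lborel {c..d}"
  proof (rule measure_mono_fmeasurable)
    show "{c..d} \<in> fmeasurable lborel" using assms by (simp add: fmeasurable_def emeasure_lborel_Icc)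
  qed auto
  also have "measure lborel {c..d} = d - c" using assms by simp
  finally show ?thesis by (simp add: divide_right_mono)
qed

lemma apx1_cont:
  fixes \<tau> :: "real \<Rightarrow> real"
  assumes cont: "continuous_on UNIV \<tau>" and bnd: "\<And>x. \<bar>\<tau> x\<bar> \<le> 1" and d: "0 < \<delta>" "\<delta> < pi/2"
    and van: "\<And>x. pi - \<delta> \<le> \<bar>x\<bar> \<Longrightarrow> \<tau> x = 0"
  shows "apx nu trig1 \<tau>"
  unfolding apx_def
proof (intro allI impI)
  fix \<epsilon> :: real assume ep: "\<epsilon> > 0"
  define \<eta> where "\<eta> = sqrt (\<epsilon> / 2)"
  have eta: "\<eta> > 0" "\<eta>\<^sup>2 = \<epsilon> / 2" using ep by (auto simp: \<eta>_def)
  obtain t where t: "t \<in> trig1" "\<And>x. x \<in> {-pi..pi} \<Longrightarrow> \<bar>\<tau> x - t x\<bar> < \<eta>"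
    using sw_circle[OF cont d van eta(1)] by blast
  have mt: "\<tau> \<in> borel_measurable borel" using cont borel_measurable_continuous_onI by blast
  have L2t: "L2 nu t" using goodT_trig1 t(1) goodT_L2 by blast
  have L2tau: "L2 nu \<tau>" using mt bnd by (intro L2_bounded[OF fm_nu]) auto
  have int: "integrable nu (\<lambda>x. (\<tau> x - t x)\<^sup>2)" using L2_diff[OF L2tau L2t] by (simp add: L2_def)
  have "integral\<^sup>L nu (\<lambda>x. (\<tau> x - t x)\<^sup>2) \<le> integral\<^sup>L nu (\<lambda>x. \<eta>\<^sup>2)"
  proof (rule integral_mono_AE[OF int])
    show "integrable nu (\<lambda>x. \<eta>\<^sup>2)" by (rule integrable_bounded_fm[OF fm_nu, where B="\<eta>\<^sup>2"]) auto
    show "AE x in nu. (\<tau> x - t x)\<^sup>2 \<le> \<eta>\<^sup>2"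
      using AE_nu
    proof (rule eventually_mono)
      fix x assume "-pi \<le> x \<and> x < pi"
      then have "\<bar>\<tau> x - t x\<bar> \<le> \<eta>" using t(2)[of x] by auto
      then show "(\<tau> x - t x)\<^sup>2 \<le> \<eta>\<^sup>2" by (rule sq_le_of_abs_le)
    qed
  qed
  also have "integral\<^sup>L nu (\<lambda>x. \<eta>\<^sup>2) = \<eta>\<^sup>2"
    using int_one_nu by (simp add: lebesgue_integral_const prob_space.prob_space[OF prob_nu])
  also have "\<dots> < \<epsilon>" using eta ep by simp
  finally show "\<exists>t\<in>trig1. integral\<^sup>L nu (\<lambda>x. (\<tau> x - t x)\<^sup>2) < \<epsilon>" using t(1) by blast
qed

lemma apx1_atMost: "apx nu trig1 (indicator {..a} :: real \<Rightarrow> real)"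
proof -
  have L2i: "L2 nu (indicator {..a} :: real \<Rightarrow> real)" by (rule L2_indicator[OF fm_nu]) simp
  consider "a < -pi" | "pi \<le> a" | "-pi \<le> a" "a < pi" by linarith
  then show ?thesis
  proof cases
    case 1
    have "integral\<^sup>L nu (\<lambda>x. (indicator {..a} x - (\<lambda>x. 0) x :: real)\<^sup>2) = 0"
      by (rule integral_eq_zero_AE) (rule eventually_mono[OF AE_nu], use 1 in \<open>auto split: split_indicator\<close>)
    then show ?thesis unfolding apx_def using trig1_const[of 0] by (intro allI impI bexI[of _ "\<lambda>x. 0"]) simp_all
  next
    case 2
    have "integral\<^sup>L nu (\<lambda>x. (indicator {..a} x - (\<lambda>x. 1) x :: real)\<^sup>2) = 0"
      by (rule integral_eq_zero_AE) (rule eventually_mono[OF AE_nu], use 2 in \<open>auto split: split_indicator\<close>)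
    then show ?thesis unfolding apx_def using trig1_const[of 1] by (intro allI impI bexI[of _ "\<lambda>x. 1"]) simp_all
  next
    case 3
    show ?thesis
    proof (rule apx_lim[OF goodT_trig1 L2i])
      fix \<epsilon> :: real assume ep: "\<epsilon> > 0"
      define h where "h = min 1 \<epsilon>"
      have h: "0 < h" "h \<le> 1" "h \<le> \<epsilon>" using ep by (auto simp: h_def)
      define \<tau> where "\<tau> x = max 0 (min 1 (min ((x + pi)/h - 1) ((a - x)/h)))" for x
      define \<delta> where "\<delta> = min (min h (pi - a)) 1"
      have d: "0 < \<delta>" "\<delta> < pi/2" "\<delta> \<le> h" "\<delta> \<le> pi - a" using h 3 pi_gt3 unfolding \<delta>_def by (auto simp: min_def)
      have cont: "continuous_on UNIV \<tau>" unfolding \<tau>_def[abs_def]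
        using h(1) by (intro continuous_intros continuous_on_max continuous_on_min) auto
      have bnd: "\<bar>\<tau> x\<bar> \<le> 1" for x unfolding \<tau>_def by auto
      have van: "\<tau> x = 0" if "pi - \<delta> \<le> \<bar>x\<bar>" for x
      proof (cases "x \<ge> 0")
        case True
        then have "a \<le> x" using that d by auto
        then have "(a - x) / h \<le> 0" using h by (simp add: divide_nonpos_pos)
        then show ?thesis unfolding \<tau>_def by simp
      next
        case False
        then have "x \<le> -pi + h" using that d by auto
        then have "(x + pi) / h \<le> 1" using h by simp
        then show ?thesis unfolding \<tau>_def by simp
      qed
      have apt: "apx nu trig1 \<tau>" by (rule apx1_cont[OF cont bnd d(1,2) van])
      have mt: "\<tau> \<in> borel_measurable borel" using cont borel_measurable_continuous_onI by blast
      have L2tau: "L2 nu \<tau>" using mt bnd by (intro L2_bounded[OF fm_nu]) auto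
      define B where "B = {-pi..-pi+2*h} \<union> {a-h..a}"
      have Bs: "B \<in> sets nu" by (simp add: B_def)
      have pw: "(indicator {..a} x - \<tau> x)\<^sup>2 \<le> indicator B x" if x: "-pi \<le> x" for x
      proof (cases "x \<in> B")
        case True
        have "\<bar>indicator {..a} x - \<tau> x\<bar> \<le> 1" using bnd[of x] unfolding \<tau>_def by (auto split: split_indicator)
        then have "(indicator {..a} x - \<tau> x)\<^sup>2 \<le> 1\<^sup>2" by (rule sq_le_of_abs_le)
        then show ?thesis using True by simp
      next
        case False
        then have nb: "\<not> x \<le> -pi + 2*h" "\<not> (a - h \<le> x \<and> x \<le> a)" using x by (auto simp: B_def)
        show ?thesis
        proof (cases "x \<le> a")
          case True
          then have "x < a - h" using nb by auto
          then have "(a - x)/h \<ge> 1" using h by (simp add: field_simps)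
          moreover have "(x + pi)/h - 1 \<ge> 1" using nb h by (simp add: field_simps)
          ultimately have "\<tau> x = 1" unfolding \<tau>_def by simp
          then show ?thesis using True by simp
        next
          case False
          then have "(a - x) / h \<le> 0" using h by (simp add: divide_nonpos_pos)
          then have "\<tau> x = 0" unfolding \<tau>_def by simp
          then show ?thesis using False by simp
        qed
      qed
      have "integral\<^sup>L nu (\<lambda>x. (indicator {..a} x - \<tau> x)\<^sup>2) \<le> integral\<^sup>L nu (indicator B)"
      proof (rule integral_mono_AE)
        show "integrable nu (\<lambda>x. (indicator {..a} x - \<tau> x)\<^sup>2)" using L2_diff[OF L2i L2tau] by (simp add: L2_def)
        show "integrable nu (indicator B :: real \<Rightarrow> real)"
        proof (rule integrable_bounded_fm[OF fm_nu, where B=1])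
          show "indicator B \<in> borel_measurable nu" using Bs by (rule borel_measurable_indicator)
        qed (simp split: split_indicator)
        show "AE x in nu. (indicator {..a} x - \<tau> x)\<^sup>2 \<le> indicator B x"
          by (rule eventually_mono[OF AE_nu]) (use pw in auto)
      qed
      also have "\<dots> = measure nu B" using Bs by simp
      also have "\<dots> \<le> measure nu {-pi..-pi+2*h} + measure nu {a-h..a}"
        unfolding B_def by (rule measure_Un_le) auto
      also have "\<dots> \<le> (2*h) / (2*pi) + h / (2*pi)"
        using measure_nu_Icc[of "-pi" "-pi+2*h"] measure_nu_Icc[of "a-h" a] h by auto
      also have "\<dots> < h"
      proof -
        have "(2*h) / (2*pi) + h / (2*pi) = h * (3 / (2*pi))" by (simp add: field_simps)
        also have "\<dots> < h * 1" using h pi_gt3 by (intro mult_strict_left_mono) auto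
        finally show ?thesis by simp
      qed
      also have "\<dots> \<le> \<epsilon>" by (rule h)
      finally show "\<exists>g. L2 nu g \<and> apx nu trig1 g \<and> integral\<^sup>L nu (\<lambda>x. (indicator {..a} x - g x)\<^sup>2) < \<epsilon>"
        using L2tau apt by blast
    qed
  qed
qed

lemma sets_nu_gen: "sets nu = sigma_sets UNIV (range atMost :: real set set)"
proof -
  have "sets nu = sets (borel :: real measure)" by simp
  also have "\<dots> = sets (sigma UNIV (range atMost :: real set set))" by (simp only: borel_eq_atMost[symmetric])
  also have "\<dots> = sigma_sets UNIV (range atMost)" by (rule sets_measure_of) auto
  finally show ?thesis .
qed

lemma Int_stable_atMost: "Int_stable (range atMost :: real set set)"
  unfolding Int_stable_def
proof (intro ballI)
  fix A B assume "A \<in> range (atMost :: real \<Rightarrow> _)" "B \<in> range (atMost :: real \<Rightarrow> _)"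
  then obtain x y where "A = {..x}" "B = {..y}" by blast
  then have "A \<inter> B = {..min x y}" by auto
  then show "A \<inter> B \<in> range atMost" by blast
qed

lemma apx1_borel: "A \<in> sets borel \<Longrightarrow> apx nu trig1 (indicator A :: real \<Rightarrow> real)"
  by (rule apx_sets[OF goodT_trig1 space_nu sets_nu_gen Int_stable_atMost])
     (auto intro: apx1_atMost)

section \<open>Two-dimensional trigonometric polynomials\<close>

inductive_set trig2 :: "(real \<times> real \<Rightarrow> real) set" where
  basis: "E p \<in> trig2"
| add: "f \<in> trig2 \<Longrightarrow> g \<in> trig2 \<Longrightarrow> (\<lambda>x. f x + g x) \<in> trig2"
| smult: "f \<in> trig2 \<Longrightarrow> (\<lambda>x. c * f x) \<in> trig2"

lemma trig2_const: "(\<lambda>x. c) \<in> trig2"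
  using trig2.smult[OF trig2.basis[of "(0,0)"], of c] by (simp add: E_def e_def)

lemma trig2_cont_bdd: "t \<in> trig2 \<Longrightarrow> continuous_on UNIV t \<and> (\<exists>B. \<forall>x. \<bar>t x\<bar> \<le> B)"
proof (induction t rule: trig2.induct)
  case (basis p) then show ?case using E_cont E_bound by blast
next
  case (add f g)
  then obtain B1 B2 where "\<forall>x. \<bar>f x\<bar> \<le> B1" "\<forall>x. \<bar>g x\<bar> \<le> B2" by blast
  then have "\<forall>x. \<bar>f x + g x\<bar> \<le> B1 + B2"
  proof (intro allI)
    fix x assume "\<forall>x. \<bar>f x\<bar> \<le> B1" "\<forall>x. \<bar>g x\<bar> \<le> B2"
    then have "\<bar>f x\<bar> \<le> B1" "\<bar>g x\<bar> \<le> B2" by blast+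
    then show "\<bar>f x + g x\<bar> \<le> B1 + B2" using abs_triangle_ineq[of "f x" "g x"] by linarith
  qed
  then show ?case using add by (auto intro!: continuous_intros)
next
  case (smult f c)
  then obtain B where B: "\<forall>x. \<bar>f x\<bar> \<le> B" by blast
  then have "\<forall>x. \<bar>c * f x\<bar> \<le> \<bar>c\<bar> * B" by (simp add: abs_mult mult_left_mono)
  then show ?case using smult by (auto intro!: continuous_intros)
qed

lemma goodT_trig2: "goodT torus_measure trig2"
  unfolding goodT_def
proof (intro conjI ballI allI)
  show "finite_measure torus_measure" by (rule fm_mu)
  fix t assume t: "t \<in> trig2"
  then obtain B where B: "\<forall>x. \<bar>t x\<bar> \<le> B" using trig2_cont_bdd by blast
  have "t \<in> borel_measurable borel" using t trig2_cont_bdd borel_measurable_continuous_onI by blast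
  then show "L2 torus_measure t" using B by (intro L2_bounded[OF fm_mu]) auto
next
  show "(\<lambda>x. 1) \<in> trig2" by (rule trig2_const)
qed (auto intro: trig2.add trig2.smult)

lemma trig2_prod: "f \<in> trig1 \<Longrightarrow> g \<in> trig1 \<Longrightarrow> (\<lambda>z. f (fst z) * g (snd z)) \<in> trig2"
proof (induction f rule: trig1.induct)
  case (basis a)
  show ?case using basis
  proof (induction g rule: trig1.induct)
    case (basis b)
    have "(\<lambda>z. e a (fst z) * e b (snd z)) = E (a, b)" by (simp add: E_def[abs_def])
    then show ?case using trig2.basis[of "(a,b)"] by simp
  next
    case (add f g) then show ?case using trig2.add[OF add.IH] by (simp add: distrib_left)
  next
    case (smult f c) then show ?case using trig2.smult[OF smult.IH, of c] by (simp add: mult.left_commute)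
  qed
next
  case (add f1 f2) then show ?case using trig2.add[OF add.IH] by (simp add: distrib_right)
next
  case (smult f c) then show ?case using trig2.smult[OF smult.IH, of c] by (simp add: mult.assoc)
qed

lemma meas_prod:
  fixes f g :: "real \<Rightarrow> real"
  assumes [measurable]: "f \<in> borel_measurable borel" "g \<in> borel_measurable borel"
  shows "(\<lambda>z. f (fst z) * g (snd z)) \<in> borel_measurable torus_measure"
  unfolding mu_eq by measurable

lemma bdd_sq:
  fixes f :: "real \<Rightarrow> real"
  assumes "\<And>x. \<bar>f x\<bar> \<le> B"
  shows "\<bar>(f x)\<^sup>2\<bar> \<le> B\<^sup>2"
  using sq_le_of_abs_le[OF assms[of x]] by simp

lemma rect:
  assumes A: "A \<in> sets borel" and B: "B \<in> sets borel"
  shows "apx torus_measure trig2 (indicator (A \<times> B) :: real \<times> real \<Rightarrow> real)"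
  unfolding apx_def
proof (intro allI impI)
  fix \<epsilon> :: real assume ep: "\<epsilon> > 0"
  define \<eta> where "\<eta> = min 1 (\<epsilon> / 20)"
  have eta: "0 < \<eta>" "\<eta> \<le> 1" "\<eta> \<le> \<epsilon> / 20" using ep by (auto simp: \<eta>_def)
  obtain t1 where t1: "t1 \<in> trig1" "integral\<^sup>L nu (\<lambda>x. (indicator A x - t1 x)\<^sup>2) < \<eta>"
    using apx1_borel[OF A] eta unfolding apx_def by blast
  obtain t2 where t2: "t2 \<in> trig1" "integral\<^sup>L nu (\<lambda>x. (indicator B x - t2 x)\<^sup>2) < \<eta>"
    using apx1_borel[OF B] eta unfolding apx_def by blast
  obtain B1 where B1: "\<And>x. \<bar>t1 x\<bar> \<le> B1" using trig1_cont_bdd[OF t1(1)] by blast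
  obtain B2 where B2: "\<And>x. \<bar>t2 x\<bar> \<le> B2" using trig1_cont_bdd[OF t2(1)] by blast
  have m1[measurable]: "t1 \<in> borel_measurable borel" by (rule trig1_meas[OF t1(1)])
  have m2[measurable]: "t2 \<in> borel_measurable borel" by (rule trig1_meas[OF t2(1)])
  have mA[measurable]: "(indicator A :: real \<Rightarrow> real) \<in> borel_measurable borel" using A by simp
  have mB[measurable]: "(indicator B :: real \<Rightarrow> real) \<in> borel_measurable borel" using B by simp
  have iA: "\<bar>indicator A x :: real\<bar> \<le> 1" "\<bar>indicator B x :: real\<bar> \<le> 1" for x by (auto split: split_indicator)
  define a1 where "a1 x = (indicator A x - t1 x)\<^sup>2" for x
  define b1 where "b1 y = (indicator B y :: real)\<^sup>2" for y
  define a2 where "a2 x = (t1 x)\<^sup>2" for x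
  define b2 where "b2 y = (indicator B y - t2 y)\<^sup>2" for y
  have ba1: "\<bar>a1 x\<bar> \<le> (1 + B1)\<^sup>2" for x
  proof -
    have "\<bar>indicator A x - t1 x\<bar> \<le> 1 + B1" using iA(1)[of x] B1[of x] by linarith
    then show ?thesis unfolding a1_def using sq_le_of_abs_le by simp
  qed
  have bb1: "\<bar>b1 x\<bar> \<le> 1\<^sup>2" for x unfolding b1_def by (rule bdd_sq[OF iA(2)])
  have ba2: "\<bar>a2 x\<bar> \<le> B1\<^sup>2" for x unfolding a2_def by (rule bdd_sq[OF B1])
  have bb2: "\<bar>b2 x\<bar> \<le> (1 + B2)\<^sup>2" for x
  proof -
    have "\<bar>indicator B x - t2 x\<bar> \<le> 1 + B2" using iA(2)[of x] B2[of x] by linarith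
    then show ?thesis unfolding b2_def using sq_le_of_abs_le by simp
  qed
  have ma1: "a1 \<in> borel_measurable borel" unfolding a1_def[abs_def] by measurable
  have mb1: "b1 \<in> borel_measurable borel" unfolding b1_def[abs_def] by measurable
  have ma2: "a2 \<in> borel_measurable borel" unfolding a2_def[abs_def] by measurable
  have mb2: "b2 \<in> borel_measurable borel" unfolding b2_def[abs_def] by measurable
  have I1: "integral\<^sup>L torus_measure (\<lambda>z. a1 (fst z) * b1 (snd z)) = integral\<^sup>L nu a1 * integral\<^sup>L nu b1"
    by (rule int_prod[OF ma1 mb1 ba1 bb1])
  have I2: "integral\<^sup>L torus_measure (\<lambda>z. a2 (fst z) * b2 (snd z)) = integral\<^sup>L nu a2 * integral\<^sup>L nu b2"
    by (rule int_prod[OF ma2 mb2 ba2 bb2])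
  have J1: "integrable torus_measure (\<lambda>z. a1 (fst z) * b1 (snd z))"
  proof (rule integrable_bounded_fm[OF fm_mu meas_prod[OF ma1 mb1], where B="(1 + B1)\<^sup>2 * 1\<^sup>2"])
    fix z show "\<bar>a1 (fst z) * b1 (snd z)\<bar> \<le> (1 + B1)\<^sup>2 * 1\<^sup>2"
      unfolding abs_mult by (intro mult_mono ba1 bb1) auto
  qed
  have J2: "integrable torus_measure (\<lambda>z. a2 (fst z) * b2 (snd z))"
  proof (rule integrable_bounded_fm[OF fm_mu meas_prod[OF ma2 mb2], where B="B1\<^sup>2 * (1 + B2)\<^sup>2"])
    fix z show "\<bar>a2 (fst z) * b2 (snd z)\<bar> \<le> B1\<^sup>2 * (1 + B2)\<^sup>2"
      unfolding abs_mult by (intro mult_mono ba2 bb2) auto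
  qed
  define \<psi> where "\<psi> z = t1 (fst z) * t2 (snd z)" for z
  have psi: "\<psi> \<in> trig2" unfolding \<psi>_def[abs_def] by (rule trig2_prod[OF t1(1) t2(1)])
  have ind: "(indicator (A \<times> B) z :: real) = indicator A (fst z) * indicator B (snd z)" for z
    by (cases z) (simp add: indicator_times)
  have L2F: "L2 torus_measure (indicator (A \<times> B) :: _ \<Rightarrow> real)"
    by (rule L2_indicator[OF fm_mu]) (simp add: A B borel_Times)
  have L2psi: "L2 torus_measure \<psi>" using goodT_L2[OF goodT_trig2 psi] .
  have intL: "integrable torus_measure (\<lambda>z. (indicator (A \<times> B) z - \<psi> z)\<^sup>2)"
    using L2_diff[OF L2F L2psi] by (simp add: L2_def)
  have pw: "(indicator (A \<times> B) z - \<psi> z)\<^sup>2 \<le> 2 * (a1 (fst z) * b1 (snd z)) + 2 * (a2 (fst z) * b2 (snd z))" for z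
  proof -
    define a where "a = (indicator A (fst z) :: real)"
    define b where "b = (indicator B (snd z) :: real)"
    define s where "s = t1 (fst z)"
    define t where "t = t2 (snd z)"
    have "(indicator (A \<times> B) z - \<psi> z)\<^sup>2 = ((a - s) * b + s * (b - t))\<^sup>2"
      unfolding ind \<psi>_def a_def b_def s_def t_def by (simp add: algebra_simps)
    also have "\<dots> \<le> 2 * ((a - s) * b)\<^sup>2 + 2 * (s * (b - t))\<^sup>2" by (rule sq_sum_le)
    also have "\<dots> = 2 * (a1 (fst z) * b1 (snd z)) + 2 * (a2 (fst z) * b2 (snd z))"
      unfolding a1_def b1_def a2_def b2_def a_def b_def s_def t_def by (simp add: power_mult_distrib)
    finally show ?thesis .
  qed
  have "integral\<^sup>L torus_measure (\<lambda>z. (indicator (A \<times> B) z - \<psi> z)\<^sup>2) \<le>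
        integral\<^sup>L torus_measure (\<lambda>z. 2 * (a1 (fst z) * b1 (snd z)) + 2 * (a2 (fst z) * b2 (snd z)))"
    by (rule integral_mono[OF intL _ pw]) (use J1 J2 in simp)
  also have "\<dots> = 2 * (integral\<^sup>L nu a1 * integral\<^sup>L nu b1) + 2 * (integral\<^sup>L nu a2 * integral\<^sup>L nu b2)"
    using J1 J2 I1 I2 by simp
  also have "\<dots> \<le> 2 * (\<eta> * 1) + 2 * ((2 * \<eta> + 2) * \<eta>)"
  proof -
    have L2A: "L2 nu (indicator A :: real \<Rightarrow> real)" by (rule L2_indicator[OF fm_nu]) (simp add: A)
    have L2B: "L2 nu (indicator B :: real \<Rightarrow> real)" by (rule L2_indicator[OF fm_nu]) (simp add: B)
    have L2t1: "L2 nu t1" using goodT_L2[OF goodT_trig1 t1(1)] .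
    have L0: "L2 nu (\<lambda>x. 0)" by (simp add: L2_def)
    have ia1: "integral\<^sup>L nu a1 \<le> \<eta>" using t1(2) by (simp add: a1_def[abs_def])
    have ib2: "integral\<^sup>L nu b2 \<le> \<eta>" using t2(2) by (simp add: b2_def[abs_def])
    have ia1p: "0 \<le> integral\<^sup>L nu a1" unfolding a1_def[abs_def] by simp
    have ib2p: "0 \<le> integral\<^sup>L nu b2" unfolding b2_def[abs_def] by simp
    have ib1: "integral\<^sup>L nu b1 \<le> 1"
    proof -
      have "integral\<^sup>L nu b1 \<le> integral\<^sup>L nu (\<lambda>x. 1)"
      proof (rule integral_mono)
        show "integrable nu b1" by (rule integrable_bounded_fm[OF fm_nu _ bb1]) (use mb1 in simp)
        show "integrable nu (\<lambda>x. 1::real)" by (rule integrable_bounded_fm[OF fm_nu, where B=1]) auto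
        fix x show "b1 x \<le> 1" using bb1[of x] by simp
      qed
      then show ?thesis using int_one_nu by simp
    qed
    have ib1p: "0 \<le> integral\<^sup>L nu b1" unfolding b1_def[abs_def] by simp
    have ia2: "integral\<^sup>L nu a2 \<le> 2 * \<eta> + 2"
    proof -
      have "integral\<^sup>L nu (\<lambda>x. (t1 x - 0)\<^sup>2) \<le> 2 * integral\<^sup>L nu (\<lambda>x. (t1 x - indicator A x)\<^sup>2) + 2 * integral\<^sup>L nu (\<lambda>x. (indicator A x - 0)\<^sup>2)"
        by (rule sq_tri3[OF L2t1 L2A L0])
      also have "integral\<^sup>L nu (\<lambda>x. (t1 x - indicator A x)\<^sup>2) = integral\<^sup>L nu a1"
        unfolding a1_def[abs_def] by (simp add: power2_commute)
      also have "integral\<^sup>L nu (\<lambda>x. (indicator A x - 0 :: real)\<^sup>2) \<le> 1"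
      proof -
        have "integral\<^sup>L nu (\<lambda>x. (indicator A x - 0 :: real)\<^sup>2) \<le> integral\<^sup>L nu (\<lambda>x. 1)"
        proof (rule integral_mono)
          show "integrable nu (\<lambda>x. (indicator A x - 0 :: real)\<^sup>2)" using L2A by (simp add: L2_def)
          show "integrable nu (\<lambda>x. 1::real)" by (rule integrable_bounded_fm[OF fm_nu, where B=1]) auto
          fix x show "(indicator A x - 0 :: real)\<^sup>2 \<le> 1" by (simp split: split_indicator)
        qed
        then show ?thesis using int_one_nu by simp
      qed
      finally show ?thesis using ia1 unfolding a2_def[abs_def] by simp
    qed
    have ia2p: "0 \<le> integral\<^sup>L nu a2" unfolding a2_def[abs_def] by simp
    have "integral\<^sup>L nu a1 * integral\<^sup>L nu b1 \<le> \<eta> * 1"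
      by (intro mult_mono ia1 ib1 ib1p) (use eta in auto)
    moreover have "integral\<^sup>L nu a2 * integral\<^sup>L nu b2 \<le> (2 * \<eta> + 2) * \<eta>"
      by (intro mult_mono ia2 ib2 ib2p) (use eta in auto)
    ultimately show ?thesis by linarith
  qed
  also have "\<dots> \<le> 10 * \<eta>"
  proof -
    have "\<eta> * \<eta> \<le> \<eta> * 1" using eta by (intro mult_left_mono) auto
    then show ?thesis by (simp add: algebra_simps)
  qed
  also have "\<dots> < \<epsilon>" using eta ep by simp
  finally show "\<exists>t\<in>trig2. integral\<^sup>L torus_measure (\<lambda>x. (indicator (A \<times> B) x - t x)\<^sup>2) < \<epsilon>"
    using psi by blast
qed

lemma sets_mu_gen: "sets torus_measure = sigma_sets UNIV {a \<times> b | a b. a \<in> sets nu \<and> b \<in> sets nu}"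
  unfolding mu_eq sets_pair_measure by simp

lemma apx2_all: "L2 torus_measure w \<Longrightarrow> apx torus_measure trig2 w"
proof (rule apx_all[OF goodT_trig2 space_mu])
  fix C assume C: "C \<in> sets torus_measure"
  show "apx torus_measure trig2 (indicator C)"
  proof (rule apx_sets[OF goodT_trig2 space_mu sets_mu_gen Int_stable_pair_measure_generator _ C])
    fix G assume "G \<in> {a \<times> b | a b. a \<in> sets nu \<and> b \<in> sets nu}"
    then obtain a b where "G = a \<times> b" "a \<in> sets borel" "b \<in> sets borel" by auto
    then show "apx torus_measure trig2 (indicator G)" using rect by simp
  qed
qed

definition BN :: "nat \<Rightarrow> (nat \<times> nat) set" where "BN N = {..<N} \<times> {..<N}"

lemma BN_finite[simp]: "finite (BN N)" by (simp add: BN_def)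

lemma BN_mono: "N \<le> M \<Longrightarrow> BN N \<subseteq> BN M" by (auto simp: BN_def)

lemma pad_sum:
  assumes "N \<le> M"
  shows "(\<Sum>q\<in>BN M. (if q \<in> BN N then d q else 0) * E q z) = (\<Sum>q\<in>BN N. d q * E q z)"
proof -
  have "(\<Sum>q\<in>BN M. (if q \<in> BN N then d q else 0) * E q z) = (\<Sum>q\<in>BN M. if q \<in> BN N then d q * E q z else 0)"
    by (rule sum.cong) auto
  also have "\<dots> = (\<Sum>q\<in>BN M \<inter> BN N. d q * E q z)" by (simp add: sum.inter_restrict)
  also have "BN M \<inter> BN N = BN N" using BN_mono[OF assms] by auto
  finally show ?thesis .
qed

lemma trig2_repr: "t \<in> trig2 \<Longrightarrow> \<exists>N d. \<forall>z. t z = (\<Sum>q\<in>BN N. d q * E q z)"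
proof (induction t rule: trig2.induct)
  case (basis p)
  obtain a b where p: "p = (a, b)" by force
  have mem: "p \<in> BN (Suc (max a b))" using p by (auto simp: BN_def)
  have "E p z = (\<Sum>q\<in>BN (Suc (max a b)). (if q = p then 1 else 0) * E q z)" for z
  proof -
    have "(\<Sum>q\<in>BN (Suc (max a b)). (if q = p then 1 else 0) * E q z) = (\<Sum>q\<in>BN (Suc (max a b)). if q = p then E q z else 0)"
      by (rule sum.cong) auto
    also have "\<dots> = E p z" using mem by (simp add: sum.delta)
    finally show ?thesis by simp
  qed
  then show ?case by (intro exI[of _ "Suc (max a b)"] exI[of _ "\<lambda>q. if q = p then 1 else 0"]) auto
next
  case (add f g)
  then obtain N1 d1 N2 d2 where f: "\<forall>z. f z = (\<Sum>q\<in>BN N1. d1 q * E q z)" and g: "\<forall>z. g z = (\<Sum>q\<in>BN N2. d2 q * E q z)"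
    by blast
  define M where "M = max N1 N2"
  define d where "d q = (if q \<in> BN N1 then d1 q else 0) + (if q \<in> BN N2 then d2 q else 0)" for q
  have "f z + g z = (\<Sum>q\<in>BN M. d q * E q z)" for z
    unfolding d_def distrib_right sum.distrib f[rule_format] g[rule_format]
    by (simp add: pad_sum M_def)
  then show ?case by blast
next
  case (smult f c)
  then obtain N d where f: "\<forall>z. f z = (\<Sum>q\<in>BN N. d q * E q z)" by blast
  have cf: "c * f z = (\<Sum>q\<in>BN N. (c * d q) * E q z)" for z
    unfolding f[rule_format] by (simp add: sum_distrib_left mult.assoc)
  show ?case by (intro exI[of _ N] exI[of _ "\<lambda>q. c * d q"] allI) (simp add: cf)
qed

section \<open>Lp norms\<close>

lemma tangent_powr:
  fixes p m t :: real
  assumes p: "1 \<le> p" and m: "0 < m" and t: "0 \<le> t"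
  shows "m powr p + p * m powr (p - 1) * (t - m) \<le> t powr p"
proof (cases "t = 0")
  case True
  have "m powr (p - 1) * m = m powr p" using m by (simp add: mult.commute powr_mult_base)
  then have "m powr p + p * m powr (p - 1) * (t - m) = (1 - p) * m powr p" using True by (simp add: algebra_simps)
  also have "\<dots> \<le> 0" using p by (simp add: mult_nonpos_nonneg)
  finally show ?thesis using True by simp
next
  case False
  then have t0: "t > 0" using t by simp
  have "p * m powr (p - 1) * (t - m) \<le> t powr p - m powr p"
  proof (rule convex_on_imp_above_tangent[where A="{0<..}"])
    show "convex_on {0<..} (\<lambda>x. x powr p)" by (rule powr_convex[OF p])
    show "connected ({0<..} :: real set)" by simp
    show "m \<in> interior {0<..}" using m by (simp add: interior_open)
    show "t \<in> {0<..}" using t0 by simp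
    show "((\<lambda>x. x powr p) has_field_derivative p * m powr (p - 1)) (at m within {0<..})"
      using has_real_derivative_powr[OF m] by (rule has_field_derivative_at_within)
  qed
  then show ?thesis by simp
qed

lemma abs_le_sq1: "\<bar>y\<bar> \<le> 1 + (y::real)\<^sup>2"
proof -
  have h0: "0 \<le> (\<bar>y\<bar> - 1)\<^sup>2" by simp
  have h: "(\<bar>y\<bar> - 1)\<^sup>2 = y\<^sup>2 - 2*\<bar>y\<bar> + 1" by (simp add: power2_diff)
  have "0 \<le> \<bar>y\<bar>" by simp
  then show ?thesis using h0 h by linarith
qed

lemma abs_powr_bound:
  fixes y p :: real
  assumes "0 \<le> p" "p \<le> 2"
  shows "\<bar>y\<bar> powr p \<le> 1 + y\<^sup>2"
proof (cases "\<bar>y\<bar> \<le> 1")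
  case True
  then have "\<bar>y\<bar> powr p \<le> 1" using assms by (intro powr_le1) auto
  moreover have "0 \<le> y\<^sup>2" by simp
  ultimately show ?thesis by linarith
next
  case False
  then have "\<bar>y\<bar> powr p \<le> \<bar>y\<bar> powr 2" using assms by (intro powr_mono) auto
  also have "\<dots> = y\<^sup>2" by (simp add: powr_numeral)
  finally show ?thesis by simp
qed

lemma L1_le_Lp:
  assumes p: "1 \<le> p" "p < 2" and u: "L2 torus_measure u"
  shows "integral\<^sup>L torus_measure (\<lambda>z. \<bar>u z\<bar>) \<le> Lp_norm p u"
proof -
  have um[measurable]: "u \<in> borel_measurable torus_measure" and ui: "integrable torus_measure (\<lambda>z. (u z)\<^sup>2)"
    using u by (auto simp: L2_def)
  have one: "integrable torus_measure (\<lambda>z. 1 :: real)"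
    by (rule integrable_bounded_fm[OF fm_mu, where B=1]) auto
  have ipow: "integrable torus_measure (\<lambda>z. \<bar>u z\<bar> powr p)"
  proof (rule Bochner_Integration.integrable_bound[of _ "\<lambda>z. 1 + (u z)\<^sup>2"])
    show "integrable torus_measure (\<lambda>z. 1 + (u z)\<^sup>2)" using one ui by simp
    show "(\<lambda>z. \<bar>u z\<bar> powr p) \<in> borel_measurable torus_measure" by measurable
    show "AE z in torus_measure. norm (\<bar>u z\<bar> powr p) \<le> norm (1 + (u z)\<^sup>2)"
      using abs_powr_bound[of p] p by auto
  qed
  have iabs: "integrable torus_measure (\<lambda>z. \<bar>u z\<bar>)"
  proof (rule Bochner_Integration.integrable_bound[of _ "\<lambda>z. 1 + (u z)\<^sup>2"])
    show "integrable torus_measure (\<lambda>z. 1 + (u z)\<^sup>2)" using one ui by simp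
    show "(\<lambda>z. \<bar>u z\<bar>) \<in> borel_measurable torus_measure" by measurable
    show "AE z in torus_measure. norm (\<bar>u z\<bar>) \<le> norm (1 + (u z)\<^sup>2)"
      using abs_le_sq1 by auto
  qed
  define m where "m = integral\<^sup>L torus_measure (\<lambda>z. \<bar>u z\<bar>)"
  define Q where "Q = integral\<^sup>L torus_measure (\<lambda>z. \<bar>u z\<bar> powr p)"
  have Lp: "Lp_norm p u = Q powr (1 / p)" by (simp add: Lp_norm_def Q_def)
  have m0: "0 \<le> m" unfolding m_def by simp
  show ?thesis
  proof (cases "m = 0")
    case True
    then show ?thesis unfolding m_def[symmetric] Lp by simp
  next
    case False
    then have mp: "m > 0" using m0 by simp
    have "integral\<^sup>L torus_measure (\<lambda>z. m powr p + p * m powr (p - 1) * (\<bar>u z\<bar> - m)) \<le> Q"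
      unfolding Q_def
    proof (rule integral_mono)
      have c: "integrable torus_measure (\<lambda>z. c :: real)" for c
        by (rule integrable_bounded_fm[OF fm_mu, where B="\<bar>c\<bar>"]) auto
      have "integrable torus_measure (\<lambda>z. \<bar>u z\<bar> - m)"
        by (rule Bochner_Integration.integrable_diff[OF iabs c])
      then have "integrable torus_measure (\<lambda>z. p * m powr (p - 1) * (\<bar>u z\<bar> - m))"
        by (rule Bochner_Integration.integrable_mult_right)
      then show "integrable torus_measure (\<lambda>z. m powr p + p * m powr (p - 1) * (\<bar>u z\<bar> - m))"
        by (rule Bochner_Integration.integrable_add[OF c])
      show "integrable torus_measure (\<lambda>z. \<bar>u z\<bar> powr p)" by (rule ipow)
      fix z show "m powr p + p * m powr (p - 1) * (\<bar>u z\<bar> - m) \<le> \<bar>u z\<bar> powr p"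
        by (rule tangent_powr[OF p(1) mp]) simp
    qed
    moreover have "integral\<^sup>L torus_measure (\<lambda>z. m powr p + p * m powr (p - 1) * (\<bar>u z\<bar> - m)) = m powr p"
    proof -
      have ms: "measure torus_measure (space torus_measure) = 1" by (rule prob_space.prob_space[OF prob_mu])
      have c: "integrable torus_measure (\<lambda>z. c :: real)" for c
        by (rule integrable_bounded_fm[OF fm_mu, where B="\<bar>c\<bar>"]) auto
      have ic: "integral\<^sup>L torus_measure (\<lambda>z. c) = (c::real)" for c
        using ms by (simp add: lebesgue_integral_const)
      have d: "integrable torus_measure (\<lambda>z. \<bar>u z\<bar> - m)"
        by (rule Bochner_Integration.integrable_diff[OF iabs c])
      have "integral\<^sup>L torus_measure (\<lambda>z. m powr p + p * m powr (p - 1) * (\<bar>u z\<bar> - m)) =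
          integral\<^sup>L torus_measure (\<lambda>z. m powr p) + integral\<^sup>L torus_measure (\<lambda>z. p * m powr (p - 1) * (\<bar>u z\<bar> - m))"
        by (rule Bochner_Integration.integral_add[OF c Bochner_Integration.integrable_mult_right[OF d]])
      also have "integral\<^sup>L torus_measure (\<lambda>z. p * m powr (p - 1) * (\<bar>u z\<bar> - m)) = p * m powr (p - 1) * integral\<^sup>L torus_measure (\<lambda>z. \<bar>u z\<bar> - m)"
        by (rule integral_mult_right_zero)
      also have "integral\<^sup>L torus_measure (\<lambda>z. \<bar>u z\<bar> - m) = integral\<^sup>L torus_measure (\<lambda>z. \<bar>u z\<bar>) - m"
        using Bochner_Integration.integral_diff[OF iabs c[of m]] ic[of m] by simp
      finally have "integral\<^sup>L torus_measure (\<lambda>z. m powr p + p * m powr (p - 1) * (\<bar>u z\<bar> - m)) =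
          m powr p + p * m powr (p - 1) * (integral\<^sup>L torus_measure (\<lambda>z. \<bar>u z\<bar>) - m)"
        using ic by simp
      then show ?thesis by (simp add: m_def)
    qed
    ultimately have "m powr p \<le> Q" by simp
    then have "(m powr p) powr (1/p) \<le> Q powr (1/p)" using mp p by (intro powr_mono2) auto
    moreover have "(m powr p) powr (1/p) = m" using mp p by (simp add: powr_powr)
    ultimately show ?thesis unfolding Lp m_def[symmetric] by simp
  qed
qed

lemma E_meas_mu: "E p \<in> borel_measurable torus_measure"
  by (subst measurable_cong_sets[OF sets_mu refl]) (rule E_meas)

lemma L2_E: "L2 torus_measure (E q)"
  by (rule L2_bounded[OF fm_mu E_meas_mu E_bound])

lemma bessel:
  assumes g: "L2 torus_measure g"
  shows "(\<Sum>q\<in>BN M. (integral\<^sup>L torus_measure (\<lambda>z. g z * E q z))\<^sup>2) \<le> integral\<^sup>L torus_measure (\<lambda>z. (g z)\<^sup>2)"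
proof -
  define cg where "cg q = integral\<^sup>L torus_measure (\<lambda>z. g z * E q z)" for q
  have "integral\<^sup>L torus_measure (\<lambda>x. (g x - (\<Sum>p\<in>BN M. cg p * E p x))\<^sup>2) =
     integral\<^sup>L torus_measure (\<lambda>x. (g x)\<^sup>2) - 2 * (\<Sum>p\<in>BN M. cg p * integral\<^sup>L torus_measure (\<lambda>x. g x * E p x)) + (\<Sum>p\<in>BN M. (cg p)\<^sup>2)"
    by (rule proj_identity[OF g BN_finite L2_E ortho2])
  moreover have "0 \<le> integral\<^sup>L torus_measure (\<lambda>x. (g x - (\<Sum>p\<in>BN M. cg p * E p x))\<^sup>2)"
    by simp
  moreover have "(\<Sum>p\<in>BN M. cg p * integral\<^sup>L torus_measure (\<lambda>x. g x * E p x)) = (\<Sum>p\<in>BN M. (cg p)\<^sup>2)"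
    by (simp add: cg_def power2_eq_square)
  ultimately show ?thesis unfolding cg_def by linarith
qed

lemma sig_bij: "odd M \<Longrightarrow> bij_betw (\<lambda>q. (sig (fst q), snd q)) (BN M) (BN M)"
  by (rule bij_betw_byWitness[where f'="\<lambda>q. (sig (fst q), snd q)"]) (auto simp: BN_def sig_lt)

lemma sig_bij2: "odd M \<Longrightarrow> bij_betw (\<lambda>q. (fst q, sig (snd q))) (BN M) (BN M)"
  by (rule bij_betw_byWitness[where f'="\<lambda>q. (fst q, sig (snd q))"]) (auto simp: BN_def sig_lt)

theorem proposition3p7:
  fixes p :: real and u g1 g2 :: "real \<times> real \<Rightarrow> real"
  assumes "1 \<le> p" and "p < 2"
    and "H1_weak_gradient u g1 g2"
  shows "grad_L2_sq g1 g2 + (Lp_norm p u)\<^sup>2 \<ge> (Lp_norm 2 u)\<^sup>2"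
proof -
  note H = assms(3)
  have Lu: "L2 torus_measure u" and Lg1: "L2 torus_measure g1" and Lg2: "L2 torus_measure g2"
    using H by (auto simp: H1_weak_gradient_def L2_torus_def L2_def)
  define c where "c q = integral\<^sup>L torus_measure (\<lambda>z. u z * E q z)" for q
  have iu: "integrable torus_measure (\<lambda>z. (u z)\<^sup>2)" using Lu by (simp add: L2_def)
  have ig1: "integrable torus_measure (\<lambda>z. (g1 z)\<^sup>2)" using Lg1 by (simp add: L2_def)
  have ig2: "integrable torus_measure (\<lambda>z. (g2 z)\<^sup>2)" using Lg2 by (simp add: L2_def)
  have grad: "grad_L2_sq g1 g2 = integral\<^sup>L torus_measure (\<lambda>z. (g1 z)\<^sup>2) + integral\<^sup>L torus_measure (\<lambda>z. (g2 z)\<^sup>2)"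
    unfolding grad_L2_sq_def by (rule Bochner_Integration.integral_add[OF ig1 ig2])
  have key: "integral\<^sup>L torus_measure (\<lambda>z. (u z)\<^sup>2) \<le> grad_L2_sq g1 g2 + (c (0,0))\<^sup>2 + \<epsilon>" if ep: "\<epsilon> > 0" for \<epsilon>
  proof -
    obtain t where t: "t \<in> trig2" "integral\<^sup>L torus_measure (\<lambda>z. (u z - t z)\<^sup>2) < \<epsilon>"
      using apx2_all[OF Lu] ep unfolding apx_def by blast
    obtain N d where tN: "\<forall>z. t z = (\<Sum>q\<in>BN N. d q * E q z)" using trig2_repr[OF t(1)] by blast
    define M where "M = 2 * N + 1"
    have NM: "N \<le> M" and oM: "odd M" and M1: "(0,0) \<in> BN M" by (auto simp: M_def BN_def)
    define d' where "d' q = (if q \<in> BN N then d q else 0)" for q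
    have tM: "t z = (\<Sum>q\<in>BN M. d' q * E q z)" for z
      unfolding d'_def pad_sum[OF NM] tN[rule_format] ..
    have PI: "integral\<^sup>L torus_measure (\<lambda>x. (u x - (\<Sum>q\<in>BN M. d' q * E q x))\<^sup>2) =
       integral\<^sup>L torus_measure (\<lambda>x. (u x)\<^sup>2) - 2 * (\<Sum>q\<in>BN M. d' q * c q) + (\<Sum>q\<in>BN M. (d' q)\<^sup>2)"
      unfolding c_def by (rule proj_identity[OF Lu BN_finite L2_E ortho2])
    have sq: "(\<Sum>q\<in>BN M. (d' q - c q)\<^sup>2) = (\<Sum>q\<in>BN M. (d' q)\<^sup>2) - 2 * (\<Sum>q\<in>BN M. d' q * c q) + (\<Sum>q\<in>BN M. (c q)\<^sup>2)"
      by (simp add: power2_diff sum.distrib sum_subtractf sum_distrib_left mult.assoc)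
    have sq0: "0 \<le> (\<Sum>q\<in>BN M. (d' q - c q)\<^sup>2)" by (rule sum_nonneg) simp
    have step1: "integral\<^sup>L torus_measure (\<lambda>z. (u z)\<^sup>2) - (\<Sum>q\<in>BN M. (c q)\<^sup>2) \<le> integral\<^sup>L torus_measure (\<lambda>z. (u z - t z)\<^sup>2)"
      using PI sq sq0 unfolding tM by linarith
    have c1: "integral\<^sup>L torus_measure (\<lambda>z. g1 z * E q z) = - sg (fst q) * c (sig (fst q), snd q)" for q
      using coef_g1[OF H, of "fst q" "snd q"] by (simp add: c_def)
    have c2: "integral\<^sup>L torus_measure (\<lambda>z. g2 z * E q z) = - sg (snd q) * c (fst q, sig (snd q))" for q
      using coef_g2[OF H, of "fst q" "snd q"] by (simp add: c_def)
    have S1: "(\<Sum>q\<in>BN M. (integral\<^sup>L torus_measure (\<lambda>z. g1 z * E q z))\<^sup>2) = (\<Sum>q\<in>BN M. (sg (fst q))\<^sup>2 * (c q)\<^sup>2)"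
    proof -
      have "(\<Sum>q\<in>BN M. (integral\<^sup>L torus_measure (\<lambda>z. g1 z * E q z))\<^sup>2) =
            (\<Sum>q\<in>BN M. (\<lambda>q. (sg (fst q))\<^sup>2 * (c q)\<^sup>2) ((\<lambda>q. (sig (fst q), snd q)) q))"
        by (rule sum.cong[OF refl]) (simp add: c1 power_mult_distrib sg_sq_sig)
      also have "\<dots> = (\<Sum>q\<in>BN M. (sg (fst q))\<^sup>2 * (c q)\<^sup>2)"
        by (rule sum.reindex_bij_betw[OF sig_bij[OF oM]])
      finally show ?thesis .
    qed
    have S2: "(\<Sum>q\<in>BN M. (integral\<^sup>L torus_measure (\<lambda>z. g2 z * E q z))\<^sup>2) = (\<Sum>q\<in>BN M. (sg (snd q))\<^sup>2 * (c q)\<^sup>2)"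
    proof -
      have "(\<Sum>q\<in>BN M. (integral\<^sup>L torus_measure (\<lambda>z. g2 z * E q z))\<^sup>2) =
            (\<Sum>q\<in>BN M. (\<lambda>q. (sg (snd q))\<^sup>2 * (c q)\<^sup>2) ((\<lambda>q. (fst q, sig (snd q))) q))"
        by (rule sum.cong[OF refl]) (simp add: c2 power_mult_distrib sg_sq_sig)
      also have "\<dots> = (\<Sum>q\<in>BN M. (sg (snd q))\<^sup>2 * (c q)\<^sup>2)"
        by (rule sum.reindex_bij_betw[OF sig_bij2[OF oM]])
      finally show ?thesis .
    qed
    have B1: "(\<Sum>q\<in>BN M. (sg (fst q))\<^sup>2 * (c q)\<^sup>2) \<le> integral\<^sup>L torus_measure (\<lambda>z. (g1 z)\<^sup>2)"
      using bessel[OF Lg1, of M] S1 by simp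
    have B2: "(\<Sum>q\<in>BN M. (sg (snd q))\<^sup>2 * (c q)\<^sup>2) \<le> integral\<^sup>L torus_measure (\<lambda>z. (g2 z)\<^sup>2)"
      using bessel[OF Lg2, of M] S2 by simp
    have pw: "(c q)\<^sup>2 - (if q = (0,0) then (c q)\<^sup>2 else 0) \<le> (sg (fst q))\<^sup>2 * (c q)\<^sup>2 + (sg (snd q))\<^sup>2 * (c q)\<^sup>2" for q
    proof (cases "q = (0,0)")
      case True then show ?thesis by simp
    next
      case False
      then have "fst q \<noteq> 0 \<or> snd q \<noteq> 0" by (cases q) auto
      then have "1 \<le> (sg (fst q))\<^sup>2 + (sg (snd q))\<^sup>2"
        using sg_sq_ge[of "fst q"] sg_sq_ge[of "snd q"] by (smt (verit) zero_le_power2)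
      then have "1 * (c q)\<^sup>2 \<le> ((sg (fst q))\<^sup>2 + (sg (snd q))\<^sup>2) * (c q)\<^sup>2"
        by (intro mult_right_mono) auto
      then show ?thesis using False by (simp add: algebra_simps)
    qed
    have "(\<Sum>q\<in>BN M. (c q)\<^sup>2 - (if q = (0,0) then (c q)\<^sup>2 else 0)) \<le>
          (\<Sum>q\<in>BN M. (sg (fst q))\<^sup>2 * (c q)\<^sup>2 + (sg (snd q))\<^sup>2 * (c q)\<^sup>2)"
      by (rule sum_mono) (rule pw)
    moreover have "(\<Sum>q\<in>BN M. (c q)\<^sup>2 - (if q = (0,0) then (c q)\<^sup>2 else 0)) = (\<Sum>q\<in>BN M. (c q)\<^sup>2) - (c (0,0))\<^sup>2"
      using M1 by (simp add: sum_subtractf sum.delta)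
    moreover have "(\<Sum>q\<in>BN M. (sg (fst q))\<^sup>2 * (c q)\<^sup>2 + (sg (snd q))\<^sup>2 * (c q)\<^sup>2) =
          (\<Sum>q\<in>BN M. (sg (fst q))\<^sup>2 * (c q)\<^sup>2) + (\<Sum>q\<in>BN M. (sg (snd q))\<^sup>2 * (c q)\<^sup>2)"
      by (rule sum.distrib)
    ultimately have "(\<Sum>q\<in>BN M. (c q)\<^sup>2) \<le> grad_L2_sq g1 g2 + (c (0,0))\<^sup>2"
      using B1 B2 grad by linarith
    then show ?thesis using step1 t(2) by linarith
  qed
  have main: "integral\<^sup>L torus_measure (\<lambda>z. (u z)\<^sup>2) \<le> grad_L2_sq g1 g2 + (c (0,0))\<^sup>2"
    by (rule field_le_epsilon) (rule key)
  have c00: "c (0,0) = integral\<^sup>L torus_measure u"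
    unfolding c_def by (simp add: E_def e_def)
  have "(c (0,0))\<^sup>2 \<le> (Lp_norm p u)\<^sup>2"
  proof -
    have "\<bar>integral\<^sup>L torus_measure u\<bar> \<le> integral\<^sup>L torus_measure (\<lambda>z. \<bar>u z\<bar>)"
      by (rule integral_abs_bound)
    also have "\<dots> \<le> Lp_norm p u" by (rule L1_le_Lp[OF assms(1,2) Lu])
    finally have "\<bar>c (0,0)\<bar> \<le> Lp_norm p u" using c00 by simp
    then show ?thesis by (rule sq_le_of_abs_le)
  qed
  moreover have "(Lp_norm 2 u)\<^sup>2 = integral\<^sup>L torus_measure (\<lambda>z. (u z)\<^sup>2)"
  proof -
    have "(\<lambda>z. \<bar>u z\<bar> powr 2) = (\<lambda>z. (u z)\<^sup>2)" by (simp add: powr_numeral)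
    then have "Lp_norm 2 u = (integral\<^sup>L torus_measure (\<lambda>z. (u z)\<^sup>2)) powr (1/2)"
      by (simp add: Lp_norm_def)
    also have "\<dots> = sqrt (integral\<^sup>L torus_measure (\<lambda>z. (u z)\<^sup>2))" by (simp add: powr_half_sqrt)
    finally show ?thesis by simp
  qed
  ultimately show ?thesis using main by linarith
qed

end
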